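(* Let $\mathcal{I}=\{1,\dots,m\}$. For each $i\in\mathcal{I}$ let $\mathcal{H}_i$ be a finite-dimensional real Hilbert space, let $\boldsymbol{\mathcal{H}}:=\mathcal{H}_1\times\cdots\times\mathcal{H}_m$ (with the product inner product), and let $\mathcal{G}$ be a finite-dimensional real Hilbert space. Let $C_i\subset\mathcal{H}_i$ ($i\in\mathcal{I}$) and $D\subset\mathcal{G}$ be nonempty closed convex sets, and let $\boldsymbol{L}:\boldsymbol{\mathcal{H}}\to\mathcal{G}$ be linear. For each $i\in\mathcal{I}$ let $\boldsymbol{f}_i:\boldsymbol{\mathcal{H}}\to\mathbb{R}$ be such that $\boldsymbol{f}_i(\cdot;\boldsymbol{x}_{\smallsetminus i}):\mathcal{H}_i\to\mathbb{R}$ is convex and differentiable for every $\boldsymbol{x}\in\boldsymbol{\mathcal{H}}$, and define $\boldsymbol{G}(\boldsymbol{x}):=(\nabla_1\boldsymbol{f}_1(\boldsymbol{x}),\dots,\nabla_m\boldsymbol{f}_m(\boldsymbol{x}))$. Assume $\boldsymbol{G}$ is monotone and $\kappa_{\boldsymbol{G}}$-Lipschitzian for some $\kappa_{\boldsymbol{G}}>0$. Let $\boldsymbol{\mathfrak{C}}:=\{\boldsymbol{x}\in C_1\times\cdots\times C_m\mid\boldsymbol{L}\boldsymbol{x}\in D\}$ and $\boldsymbol{\mathcal{V}}:=\{\boldsymbol{v}\in\boldsymbol{\mathfrak{C}}\mid\langle\boldsymbol{G}(\boldsymbol{v}),\boldsymbol{w}-\boldsymbol{v}\rangle\ge0\ \forall\boldsymbol{w}\in\boldsymbol{\mathfrak{C}}\}$,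 and assume $\boldsymbol{\mathcal{V}}\ne\varnothing$. For each $i\in\mathcal{I}$ let $f^{\langle u\rangle}_i:\boldsymbol{\mathcal{H}}\to\mathbb{R}$ be such that $f^{\langle u\rangle}_i(\cdot;\boldsymbol{x}_{\smallsetminus i})$ is convex and differentiable for every $\boldsymbol{x}\in\boldsymbol{\mathcal{H}}$, define $\boldsymbol{\mathfrak{G}}^{\langle u\rangle}(\boldsymbol{x}):=(\nabla_1 f^{\langle u\rangle}_1(\boldsymbol{x}),\dots,\nabla_m f^{\langle u\rangle}_m(\boldsymbol{x}))$ and $\boldsymbol{\mathcal{V}}^{\langle u\rangle}:=\{\boldsymbol{x}\in\boldsymbol{\mathcal{V}}\mid\langle\boldsymbol{\mathfrak{G}}^{\langle u\rangle}(\boldsymbol{x}),\boldsymbol{y}-\boldsymbol{x}\rangle\ge0\ \forall\boldsymbol{y}\in\boldsymbol{\mathcal{V}}\}$. Let $\gamma\in(0,1/(\kappa_{\boldsymbol{G}}+\|\boldsymbol{L}\|_{\mathrm{op}}))$, $\alpha\in(0,1)$, and define on $\boldsymbol{\mathcal{H}}\times\mathcal{G}$: $\boldsymbol{A}(\boldsymbol{x},u):=(\boldsymbol{G}(\boldsymbol{x})+\boldsymbol{L}^*u,-\boldsymbol{L}\boldsymbol{x})$, $\boldsymbol{B}(\boldsymbol{x},u):=\big(N_{C_1}(x_1)\times\cdots\times N_{C_m}(x_m)\big)\times\partial\iota_D^*(u)$, $\boldsymbol{T}_{\mathrm{FBF}}:=(\mathrm{Id}-\gamma\boldsymbol{A})\circ(\mathrm{Id}+\gamma\boldsymbol{B})^{-1}\circ(\mathrm{Id}-\gamma\boldsymbol{A})+\gamma\boldsymbol{A}$,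 $\boldsymbol{T}_\alpha:=(1-\alpha)\mathrm{Id}+\alpha\boldsymbol{T}_{\mathrm{FBF}}$, and $\boldsymbol{\mathfrak{G}}^{\langle u\rangle}_{\mathrm{FBF}}(\boldsymbol{x},u):=(\boldsymbol{\mathfrak{G}}^{\langle u\rangle}(\boldsymbol{x}),\boldsymbol{0}_{\mathcal{G}})$. Let $(\lambda_n)_{n\in\mathbb{N}}\subset[0,\infty)$ satisfy $\lim_{n\to\infty}\lambda_n=0$ and $\sum_{n\in\mathbb{N}}\lambda_n=\infty$. Given $\boldsymbol{\xi}_0\in\boldsymbol{\mathcal{H}}\times\mathcal{G}$, define $$\boldsymbol{\xi}_{n+1}=\boldsymbol{T}_\alpha(\boldsymbol{\xi}_n)-\lambda_{n+1}\boldsymbol{\mathfrak{G}}^{\langle u\rangle}_{\mathrm{FBF}}(\boldsymbol{T}_\alpha(\boldsymbol{\xi}_n))\quad(n\in\mathbb{N}),$$ and write $\boldsymbol{\xi}_n=(\boldsymbol{x}_n,u_n)$. Assume: (i) $\boldsymbol{\mathfrak{G}}^{\langle u\rangle}$ is Lipschitzian and paramonotone, i.e., monotone and, for all $\boldsymbol{x},\boldsymbol{y}$, $\langle\boldsymbol{\mathfrak{G}}^{\langle u\rangle}(\boldsymbol{x})-\boldsymbol{\mathfrak{G}}^{\langle u\rangle}(\boldsymbol{y}),\boldsymbol{x}-\boldsymbol{y}\rangle=0$ iff $\boldsymbol{\mathfrak{G}}^{\langle u\rangle}(\boldsymbol{x})=\boldsymbol{\mathfrak{G}}^{\langle u\rangle}(\boldsymbol{y})$;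 (ii) $\mathrm{Fix}(\boldsymbol{T}_\alpha)$ is bounded; (iii) the sequence $(\boldsymbol{\xi}_n)_{n\in\mathbb{N}}$ is bounded. Then $\lim_{n\to\infty}d(\boldsymbol{x}_n,\boldsymbol{\mathcal{V}}^{\langle u\rangle})=0$, where $d(\boldsymbol{x},\boldsymbol{\mathcal{V}}^{\langle u\rangle}):=\inf_{\boldsymbol{y}\in\boldsymbol{\mathcal{V}}^{\langle u\rangle}}\|\boldsymbol{y}-\boldsymbol{x}\|$.
   Context: For $\boldsymbol{x}=(x_1,\dots,x_m)\in\boldsymbol{\mathcal{H}}$, $\boldsymbol{x}_{\smallsetminus i}$ denotes the components other than the $i$-th, and $(y;\boldsymbol{x}_{\smallsetminus i})$ denotes $\boldsymbol{x}$ with its $i$-th component replaced by $y\in\mathcal{H}_i$; $\nabla_i\boldsymbol{f}_i(\boldsymbol{x})$ (resp. $\nabla_i f^{\langle u\rangle}_i(\boldsymbol{x})$) is the gradient at $x_i$ of $\boldsymbol{f}_i(\cdot;\boldsymbol{x}_{\smallsetminus i})$ (resp. $f^{\langle u\rangle}_i(\cdot;\boldsymbol{x}_{\smallsetminus i})$). $N_C$ denotes the normal cone of a closed convex set $C$, $\iota_D^*$ the convex conjugate of the indicator function of $D$, $\partial$ the subdifferential, $\boldsymbol{L}^*$ the adjoint, $\|\cdot\|_{\mathrm{op}}$ the operator norm, and $\mathrm{Fix}(T)$ the fixed point set of $T$. The set $\boldsymbol{\mathcal{V}}^{\langle u\rangle}$ is the solution set of the variational inequality over the variational equilibria $\boldsymbol{\mathcal{V}}$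 associated with the upper-level game in which player $i$ minimizes $f^{\langle u\rangle}_i(\cdot;\boldsymbol{x}_{\smallsetminus i})$ over $\boldsymbol{\mathcal{V}}$. *)

theory Defs
  imports "HOL-Analysis.Analysis"
begin

text \<open>The product space H = H_1 x ... x H_m is modelled as a finite-dimensional
real inner product space 'a together with a family of orthogonal projections
P i (i = 1..m) onto mutually orthogonal subspaces H_i = range (P i) summing to
the whole space. Component i of x is P i x, and (y; x without i) is x - P i x + y.\<close>

definition orth_decomp :: "nat \<Rightarrow> (nat \<Rightarrow> 'a::euclidean_space \<Rightarrow> 'a) \<Rightarrow> bool" where
  "orth_decomp m P \<longleftrightarrow>
     (\<forall>i\<in>{1..m}. linear (P i) \<and> (\<forall>x. P i (P i x) = P i x) \<and>
                 (\<forall>x y. P i x \<bullet> y = x \<bullet> P i y)) \<and>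
     (\<forall>i\<in>{1..m}. \<forall>j\<in>{1..m}. i \<noteq> j \<longrightarrow> (\<forall>x. P i (P j x) = 0)) \<and>
     (\<forall>x. (\<Sum>i\<in>{1..m}. P i x) = x)"

definition repl :: "('a::real_vector \<Rightarrow> 'a) \<Rightarrow> 'a \<Rightarrow> 'a \<Rightarrow> 'a" where
  "repl Q x y = x - Q x + y"

text \<open>Gradient at x_i of f(.; x without i) as a function on H_i = range Q.\<close>
definition partial_grad :: "('a::euclidean_space \<Rightarrow> 'a) \<Rightarrow> ('a \<Rightarrow> real) \<Rightarrow> 'a \<Rightarrow> 'a" where
  "partial_grad Q f x = (SOME g. g \<in> range Q \<and>
      ((\<lambda>z. f (repl Q x z)) has_derivative (\<lambda>h. g \<bullet> h)) (at (Q x) within range Q))"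

text \<open>Pseudo-gradient (nabla_1 f_1(x), ..., nabla_m f_m(x)), embedded in the product space.\<close>
definition pseudo_grad :: "nat \<Rightarrow> (nat \<Rightarrow> 'a::euclidean_space \<Rightarrow> 'a) \<Rightarrow> (nat \<Rightarrow> 'a \<Rightarrow> real) \<Rightarrow> 'a \<Rightarrow> 'a" where
  "pseudo_grad m P f x = (\<Sum>i\<in>{1..m}. partial_grad (P i) (f i) x)"

definition normal_cone :: "'a::real_inner set \<Rightarrow> 'a set \<Rightarrow> 'a \<Rightarrow> 'a set" where
  "normal_cone S C x = (if x \<in> C then {d \<in> S. \<forall>c\<in>C. d \<bullet> (c - x) \<le> 0} else {})"

definition iota :: "'a set \<Rightarrow> 'a \<Rightarrow> ereal" where
  "iota D y = (if y \<in> D then 0 else \<infinity>)"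

definition conjugate :: "('a::real_inner \<Rightarrow> ereal) \<Rightarrow> 'a \<Rightarrow> ereal" where
  "conjugate f u = (SUP y. ereal (y \<bullet> u) - f y)"

definition subdiff :: "('a::real_inner \<Rightarrow> ereal) \<Rightarrow> 'a \<Rightarrow> 'a set" where
  "subdiff f u = {v. f u \<noteq> \<infinity> \<and> f u \<noteq> -\<infinity> \<and> (\<forall>w. f u + ereal (v \<bullet> (w - u)) \<le> f w)}"

definition feas :: "nat \<Rightarrow> (nat \<Rightarrow> 'a::euclidean_space \<Rightarrow> 'a) \<Rightarrow> (nat \<Rightarrow> 'a set) \<Rightarrow> ('a \<Rightarrow> 'g) \<Rightarrow> 'g set \<Rightarrow> 'a set" where
  "feas m P C L D = {x. (\<forall>i\<in>{1..m}. P i x \<in> C i) \<and> L x \<in> D}"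

definition VI_sol :: "('a::real_inner \<Rightarrow> 'a) \<Rightarrow> 'a set \<Rightarrow> 'a set" where
  "VI_sol F K = {v \<in> K. \<forall>w\<in>K. F v \<bullet> (w - v) \<ge> 0}"

definition resolvent :: "real \<Rightarrow> ('a::real_vector \<Rightarrow> 'a set) \<Rightarrow> 'a \<Rightarrow> 'a" where
  "resolvent \<gamma> B z = (THE w. z \<in> {w + \<gamma> *\<^sub>R b | b. b \<in> B w})"

definition opA :: "('a::euclidean_space \<Rightarrow> 'a) \<Rightarrow> ('a \<Rightarrow> 'g::euclidean_space) \<Rightarrow> 'a \<times> 'g \<Rightarrow> 'a \<times> 'g" where
  "opA G L = (\<lambda>(x, u). (G x + adjoint L u, - L x))"

definition opB :: "nat \<Rightarrow> (nat \<Rightarrow> 'a::euclidean_space \<Rightarrow> 'a) \<Rightarrow> (nat \<Rightarrow> 'a set) \<Rightarrow> 'g::euclidean_space set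
                    \<Rightarrow> 'a \<times> 'g \<Rightarrow> ('a \<times> 'g) set" where
  "opB m P C D = (\<lambda>(x, u). {(a, b). (\<forall>i\<in>{1..m}. P i a \<in> normal_cone (range (P i)) (C i) (P i x))
                                   \<and> b \<in> subdiff (conjugate (iota D)) u})"

definition T_FBF :: "real \<Rightarrow> ('b::real_vector \<Rightarrow> 'b) \<Rightarrow> ('b \<Rightarrow> 'b set) \<Rightarrow> 'b \<Rightarrow> 'b" where
  "T_FBF \<gamma> A B \<xi> =
     (let J = resolvent \<gamma> B; p = J (\<xi> - \<gamma> *\<^sub>R A \<xi>) in (p - \<gamma> *\<^sub>R A p) + \<gamma> *\<^sub>R A \<xi>)"

definition T_alpha :: "real \<Rightarrow> ('b::real_vector \<Rightarrow> 'b) \<Rightarrow> 'b \<Rightarrow> 'b" where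
  "T_alpha \<alpha> T \<xi> = (1 - \<alpha>) *\<^sub>R \<xi> + \<alpha> *\<^sub>R T \<xi>"

end

theory Submission
  imports Defs
begin

lemma nsq_add: "norm (x + y)^2 = norm x^2 + 2 * (x \<bullet> y) + norm (y::'a::real_inner)^2"
  by (simp add: power2_norm_eq_inner inner_simps inner_commute)

lemma nsq_diff: "norm (x - y)^2 = norm x^2 - 2 * (x \<bullet> y) + norm (y::'a::real_inner)^2"
  by (simp add: power2_norm_eq_inner inner_simps inner_commute)

lemma nsq_diff_scale: "norm (x - c *\<^sub>R y)^2 = norm x^2 - 2*c*(y \<bullet> x) + c^2*norm (y::'a::real_inner)^2"
  by (simp add: nsq_diff power_mult_distrib inner_commute)

lemma nsq_add_scale: "norm (x + c *\<^sub>R y)^2 = norm x^2 + 2*c*(y \<bullet> x) + c^2*norm (y::'a::real_inner)^2"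
  by (simp add: nsq_add power_mult_distrib inner_commute)

lemma conv_real: "(1-(a::real))^2*x + 2*((1-a)*a)*w + a^2*y = (1-a)*x + a*y - a*(1-a)*(x - 2*w + y)"
  by (simp add: algebra_simps power2_eq_square)

lemma conv_id: "norm ((1-\<alpha>) *\<^sub>R (u::'a::real_inner) + \<alpha> *\<^sub>R v)^2 = (1-\<alpha>)*norm u^2 + \<alpha>*norm v^2 - \<alpha>*(1-\<alpha>)*norm(u - v)^2"
proof -
  have h1: "norm ((1-\<alpha>) *\<^sub>R u + \<alpha> *\<^sub>R v)^2 = (1-\<alpha>)^2 * norm u^2 + 2*((1-\<alpha>)*\<alpha>)*(u \<bullet> v) + \<alpha>^2 * norm v^2"
    by (simp add: nsq_add power_mult_distrib)
  have h2: "norm(u - v)^2 = norm u^2 - 2*(u \<bullet> v) + norm v^2" by (rule nsq_diff)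
  show ?thesis unfolding h1 h2 by (rule conv_real)
qed

locale fbf =
  fixes A :: "'e::euclidean_space \<Rightarrow> 'e" and B :: "'e \<Rightarrow> 'e set" and \<gamma> K :: real
  assumes A_mono: "\<And>x y. (A x - A y) \<bullet> (x - y) \<ge> 0"
    and A_lip: "\<And>x y. norm (A x - A y) \<le> K * norm (x - y)"
    and K_nn: "K \<ge> 0" and g_pos: "\<gamma> > 0" and gK: "\<gamma> * K < 1"
    and B_mono: "\<And>x y a b. a \<in> B x \<Longrightarrow> b \<in> B y \<Longrightarrow> (a - b) \<bullet> (x - y) \<ge> 0"
    and B_res: "\<And>z. \<exists>w. \<exists>b\<in>B w. z = w + \<gamma> *\<^sub>R b"
begin

lemma res_unique:
  assumes "b \<in> B w" "z = w + \<gamma> *\<^sub>R b"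
  shows "resolvent \<gamma> B z = w"
  unfolding resolvent_def
proof (rule the_equality)
  show "z \<in> {w + \<gamma> *\<^sub>R b |b. b \<in> B w}" using assms by auto
next
  fix w' assume "z \<in> {w' + \<gamma> *\<^sub>R b |b. b \<in> B w'}"
  then obtain b' where b': "b' \<in> B w'" "z = w' + \<gamma> *\<^sub>R b'" by auto
  have m: "(b - b') \<bullet> (w - w') \<ge> 0" using B_mono[OF assms(1) b'(1)] .
  have e: "w - w' = \<gamma> *\<^sub>R (b' - b)" using assms(2) b'(2) by (simp add: algebra_simps)
  have "(b - b') \<bullet> (w - w') = - \<gamma> * ((b - b') \<bullet> (b - b'))"
    unfolding e by (simp add: inner_simps algebra_simps)
  with m have "\<gamma> * ((b - b') \<bullet> (b - b')) \<le> 0" by linarith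
  with g_pos have "(b - b') \<bullet> (b - b') \<le> 0" by (auto simp: mult_le_0_iff)
  hence "b = b'" by (metis antisym inner_ge_zero inner_eq_zero_iff right_minus_eq)
  thus "w' = w" using e by simp
qed

lemma res_prop: "\<exists>b\<in>B (resolvent \<gamma> B z). z = resolvent \<gamma> B z + \<gamma> *\<^sub>R b"
proof -
  obtain w b where "b \<in> B w" "z = w + \<gamma> *\<^sub>R b" using B_res by blast
  moreover then have "resolvent \<gamma> B z = w" by (rule res_unique)
  ultimately show ?thesis by auto
qed

lemma res_nonexp: "norm (resolvent \<gamma> B z - resolvent \<gamma> B z') \<le> norm (z - z')"
proof -
  obtain b where b: "b \<in> B (resolvent \<gamma> B z)" "z = resolvent \<gamma> B z + \<gamma> *\<^sub>R b" using res_prop by blast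
  obtain b' where b': "b' \<in> B (resolvent \<gamma> B z')" "z' = resolvent \<gamma> B z' + \<gamma> *\<^sub>R b'" using res_prop by blast
  define w where "w = resolvent \<gamma> B z - resolvent \<gamma> B z'"
  define c where "c = b - b'"
  have m: "c \<bullet> w \<ge> 0" unfolding c_def w_def using B_mono[OF b(1) b'(1)] .
  have "z - z' = w + \<gamma> *\<^sub>R c" unfolding w_def c_def
    by (subst b(2), subst b'(2)) (simp add: algebra_simps)
  hence "norm (z - z')^2 = norm (w + \<gamma> *\<^sub>R c)^2" by (simp only:)
  also have "\<dots> = norm w ^2 + 2 * \<gamma> * (c \<bullet> w) + \<gamma>^2 * norm c^2"
    by (simp add: nsq_add inner_commute power_mult_distrib)
  also have "\<dots> \<ge> norm w ^2" using m g_pos by (simp add: add_nonneg_nonneg)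
  finally have "norm w ^2 \<le> norm (z - z')^2" .
  thus ?thesis unfolding w_def using power2_le_imp_le by fastforce
qed

lemma cont_res: "continuous_on UNIV (resolvent \<gamma> B)"
  by (rule lipschitz_on_continuous_on[where L=1], rule lipschitz_onI)
     (use res_nonexp in \<open>auto simp: dist_norm\<close>)

lemma cont_A: "continuous_on UNIV A"
  by (rule lipschitz_on_continuous_on[where L=K], rule lipschitz_onI)
     (use A_lip K_nn in \<open>auto simp: dist_norm\<close>)

definition "Zs = {x. - A x \<in> B x}"

lemma T_eq: "T_FBF \<gamma> A B \<xi> = resolvent \<gamma> B (\<xi> - \<gamma> *\<^sub>R A \<xi>)
    - \<gamma> *\<^sub>R A (resolvent \<gamma> B (\<xi> - \<gamma> *\<^sub>R A \<xi>)) + \<gamma> *\<^sub>R A \<xi>"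
  by (simp add: T_FBF_def Let_def)

lemma fbf_ineq:
  assumes bz: "bz \<in> B z"
  shows "norm (T_FBF \<gamma> A B \<xi> - z)^2 \<le> norm (\<xi> - z)^2
           - 2 * \<gamma> * ((A z + bz) \<bullet> (resolvent \<gamma> B (\<xi> - \<gamma> *\<^sub>R A \<xi>) - z))"
proof -
  define p where "p = resolvent \<gamma> B (\<xi> - \<gamma> *\<^sub>R A \<xi>)"
  obtain b where b: "b \<in> B p" "\<xi> - \<gamma> *\<^sub>R A \<xi> = p + \<gamma> *\<^sub>R b"
    using res_prop unfolding p_def by blast
  define a where "a = A \<xi>"
  define ap where "ap = A p"
  have xi: "\<xi> = p + \<gamma> *\<^sub>R (b + a)" using b(2) unfolding a_def by (simp add: algebra_simps)
  have "T_FBF \<gamma> A B \<xi> - z = (p - z) - \<gamma> *\<^sub>R (ap - a)"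
    unfolding T_eq p_def[symmetric] a_def ap_def by (simp add: algebra_simps)
  hence e1: "norm (T_FBF \<gamma> A B \<xi> - z)^2 = norm (p-z)^2 - 2*\<gamma>*((ap - a) \<bullet> (p-z)) + \<gamma>^2 * norm (ap - a)^2"
    by (simp only: nsq_diff_scale)
  have "\<xi> - z = (p - z) + \<gamma> *\<^sub>R (b + a)" using xi by (simp add: algebra_simps)
  hence e2: "norm (\<xi> - z)^2 = norm (p-z)^2 + 2*\<gamma>*((b + a) \<bullet> (p-z)) + \<gamma>^2 * norm (b + a)^2"
    by (simp only: nsq_add_scale)
  have m1: "(ap - A z) \<bullet> (p - z) \<ge> 0" unfolding ap_def by (rule A_mono)
  have m2: "(b - bz) \<bullet> (p - z) \<ge> 0" by (rule B_mono[OF b(1) bz])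
  define M where "M = (ap + b - (A z + bz)) \<bullet> (p - z)"
  have M: "M \<ge> 0" using m1 m2 unfolding M_def by (simp add: inner_simps)
  have sp: "(ap - a) \<bullet> (p-z) + (b + a) \<bullet> (p-z) = M + (A z + bz) \<bullet> (p - z)"
    unfolding M_def by (simp add: inner_simps)
  have "norm (ap - a) \<le> K * norm (p - \<xi>)" unfolding ap_def a_def by (rule A_lip)
  also have "norm (p - \<xi>) = \<gamma> * norm (b + a)"
    using xi g_pos by (simp add: norm_minus_commute)
  finally have "norm (ap - a) \<le> (\<gamma> * K) * norm (b + a)" by (simp add: algebra_simps)
  also have "\<dots> \<le> norm (b + a)" by (rule mult_left_le_one_le) (use gK g_pos K_nn in auto)
  finally have "norm (ap - a)^2 \<le> norm (b + a)^2" by (simp add: power_mono)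
  hence q: "\<gamma>^2 * norm (ap - a)^2 \<le> \<gamma>^2 * norm (b + a)^2" by (simp add: mult_left_mono)
  have gm: "\<gamma> * M \<ge> 0" using M g_pos by simp
  have "\<gamma> * ((ap - a) \<bullet> (p-z)) + \<gamma> * ((b + a) \<bullet> (p-z)) = \<gamma> * M + \<gamma> * ((A z + bz) \<bullet> (p - z))"
    using sp by (metis distrib_left)
  thus ?thesis unfolding p_def[symmetric] using e1 e2 q gm by linarith
qed


lemma Ta_decomp: "T_alpha \<alpha> (T_FBF \<gamma> A B) \<xi> - z = (1-\<alpha>) *\<^sub>R (\<xi> - z) + \<alpha> *\<^sub>R (T_FBF \<gamma> A B \<xi> - z)"
  by (simp add: T_alpha_def algebra_simps)

lemma Ta_ineq_gen:
  assumes bz: "bz \<in> B z" and a: "0 \<le> \<alpha>" "\<alpha> \<le> 1"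
  shows "norm (T_alpha \<alpha> (T_FBF \<gamma> A B) \<xi> - z)^2 \<le> norm (\<xi> - z)^2
           - 2 * \<alpha> * \<gamma> * ((A z + bz) \<bullet> (resolvent \<gamma> B (\<xi> - \<gamma> *\<^sub>R A \<xi>) - z))"
proof -
  let ?W = "(A z + bz) \<bullet> (resolvent \<gamma> B (\<xi> - \<gamma> *\<^sub>R A \<xi>) - z)"
  have "norm (T_alpha \<alpha> (T_FBF \<gamma> A B) \<xi> - z)^2 \<le> (1-\<alpha>)*norm (\<xi> - z)^2 + \<alpha>*norm (T_FBF \<gamma> A B \<xi> - z)^2"
    unfolding Ta_decomp conv_id using a by simp
  also have "\<dots> \<le> (1-\<alpha>)*norm (\<xi> - z)^2 + \<alpha>*(norm (\<xi> - z)^2 - 2 * \<gamma> * ?W)"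
    using fbf_ineq[OF bz, of \<xi>] a by (simp add: mult_left_mono)
  finally show ?thesis by (simp add: algebra_simps)
qed

lemma Ta_ineq:
  assumes z: "z \<in> Zs" and a: "0 < \<alpha>" "\<alpha> \<le> 1"
  shows "norm (T_alpha \<alpha> (T_FBF \<gamma> A B) \<xi> - z)^2 \<le> norm (\<xi> - z)^2
           - ((1-\<alpha>)/\<alpha>) * norm (T_alpha \<alpha> (T_FBF \<gamma> A B) \<xi> - \<xi>)^2"
proof -
  let ?T = "T_FBF \<gamma> A B \<xi>"
  have "- A z \<in> B z" using z unfolding Zs_def by simp
  from fbf_ineq[OF this, of \<xi>] have t: "norm (?T - z)^2 \<le> norm (\<xi> - z)^2" by simp
  have d: "T_alpha \<alpha> (T_FBF \<gamma> A B) \<xi> - \<xi> = \<alpha> *\<^sub>R (?T - \<xi>)" by (simp add: T_alpha_def algebra_simps)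
  have "norm (T_alpha \<alpha> (T_FBF \<gamma> A B) \<xi> - z)^2 = (1-\<alpha>)*norm (\<xi> - z)^2 + \<alpha>*norm (?T - z)^2 - \<alpha>*(1-\<alpha>)*norm(?T - \<xi>)^2"
    unfolding Ta_decomp conv_id by (simp add: norm_minus_commute)
  also have "\<dots> \<le> (1-\<alpha>)*norm (\<xi> - z)^2 + \<alpha>*norm (\<xi> - z)^2 - \<alpha>*(1-\<alpha>)*norm(?T - \<xi>)^2"
    using t a by (simp add: mult_left_mono)
  also have "\<alpha>*(1-\<alpha>)*norm(?T - \<xi>)^2 = ((1-\<alpha>)/\<alpha>) * norm (T_alpha \<alpha> (T_FBF \<gamma> A B) \<xi> - \<xi>)^2"
    unfolding d norm_scaleR power_mult_distrib using a by (simp add: power2_eq_square field_simps)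
  finally show ?thesis by (simp add: algebra_simps)
qed

lemma fix_T: "T_FBF \<gamma> A B \<xi> = \<xi> \<longleftrightarrow> \<xi> \<in> Zs"
proof
  assume z: "\<xi> \<in> Zs"
  have "resolvent \<gamma> B (\<xi> - \<gamma> *\<^sub>R A \<xi>) = \<xi>"
    by (rule res_unique[of "- A \<xi>"]) (use z in \<open>auto simp: Zs_def\<close>)
  thus "T_FBF \<gamma> A B \<xi> = \<xi>" unfolding T_eq by simp
next
  assume fx: "T_FBF \<gamma> A B \<xi> = \<xi>"
  define p where "p = resolvent \<gamma> B (\<xi> - \<gamma> *\<^sub>R A \<xi>)"
  obtain b where b: "b \<in> B p" "\<xi> - \<gamma> *\<^sub>R A \<xi> = p + \<gamma> *\<^sub>R b"
    using res_prop unfolding p_def by blast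
  have "p - \<xi> = \<gamma> *\<^sub>R (A p - A \<xi>)" using fx unfolding T_eq p_def[symmetric] by (simp add: algebra_simps)
  hence "norm (p - \<xi>) = \<gamma> * norm (A p - A \<xi>)" using g_pos by simp
  also have "\<dots> \<le> \<gamma> * (K * norm (p - \<xi>))" using A_lip g_pos by (simp add: mult_left_mono)
  finally have "(1 - \<gamma> * K) * norm (p - \<xi>) \<le> 0" by (simp add: algebra_simps)
  with gK have "norm (p - \<xi>) \<le> 0" by (simp add: mult_le_0_iff)
  hence p: "p = \<xi>" by simp
  with b(2) have "\<gamma> *\<^sub>R (b + A \<xi>) = 0" by (simp add: algebra_simps)
  with g_pos have "b + A \<xi> = 0" by simp
  hence "b = - A \<xi>" by (simp add: eq_neg_iff_add_eq_0)
  with b(1) p show "\<xi> \<in> Zs" unfolding Zs_def by simp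
qed

lemma fix_Ta: assumes "\<alpha> \<noteq> 0" shows "T_alpha \<alpha> (T_FBF \<gamma> A B) \<xi> = \<xi> \<longleftrightarrow> \<xi> \<in> Zs"
proof -
  have d: "T_alpha \<alpha> (T_FBF \<gamma> A B) \<xi> - \<xi> = \<alpha> *\<^sub>R (T_FBF \<gamma> A B \<xi> - \<xi>)"
    by (simp add: T_alpha_def algebra_simps)
  have "T_alpha \<alpha> (T_FBF \<gamma> A B) \<xi> = \<xi> \<longleftrightarrow> T_alpha \<alpha> (T_FBF \<gamma> A B) \<xi> - \<xi> = 0" by simp
  also have "\<dots> \<longleftrightarrow> T_FBF \<gamma> A B \<xi> - \<xi> = 0" unfolding d using assms by simp
  finally show ?thesis using fix_T by simp
qed

lemma maximal:
  assumes h: "\<And>z bz. bz \<in> B z \<Longrightarrow> (A z + bz) \<bullet> (z - q) \<ge> 0"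
  shows "q \<in> Zs"
proof -
  define p where "p = resolvent \<gamma> B (q - \<gamma> *\<^sub>R A q)"
  obtain b where b: "b \<in> B p" "q - \<gamma> *\<^sub>R A q = p + \<gamma> *\<^sub>R b"
    using res_prop unfolding p_def by blast
  have "(A p + b) \<bullet> (p - q) \<ge> 0" using h[OF b(1)] .
  hence "\<gamma> * ((A p + b) \<bullet> (p - q)) \<ge> 0" using g_pos by simp
  moreover have "\<gamma> *\<^sub>R (A p + b) = \<gamma> *\<^sub>R (A p - A q) - (p - q)" using b(2) by (simp add: algebra_simps)
  hence "\<gamma> * ((A p + b) \<bullet> (p - q)) = \<gamma> * ((A p - A q) \<bullet> (p - q)) - norm (p - q)^2"
    by (metis inner_diff_left inner_scaleR_left power2_norm_eq_inner)
  ultimately have "norm (p - q)^2 \<le> \<gamma> * ((A p - A q) \<bullet> (p - q))" by linarith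
  also have "\<dots> \<le> \<gamma> * (norm (A p - A q) * norm (p - q))"
    using g_pos norm_cauchy_schwarz by (simp add: mult_left_mono)
  also have "\<dots> \<le> \<gamma> * (K * norm (p - q) * norm (p - q))"
    using g_pos A_lip by (simp add: mult_left_mono mult_right_mono)
  finally have "(1 - \<gamma> * K) * norm (p - q)^2 \<le> 0" by (simp add: algebra_simps power2_eq_square)
  with gK have "norm (p - q)^2 \<le> 0" by (simp add: mult_le_0_iff)
  hence p: "p = q" by simp
  with b(2) have "\<gamma> *\<^sub>R (b + A q) = 0" by (simp add: algebra_simps)
  with g_pos have "b + A q = 0" by simp
  hence "b = - A q" by (simp add: eq_neg_iff_add_eq_0)
  with b(1) p show "q \<in> Zs" unfolding Zs_def by simp
qed

lemma Zs_char: "Zs = {q. \<forall>z bz. bz \<in> B z \<longrightarrow> (A z + bz) \<bullet> (z - q) \<ge> 0}"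
proof
  show "Zs \<subseteq> {q. \<forall>z bz. bz \<in> B z \<longrightarrow> (A z + bz) \<bullet> (z - q) \<ge> 0}"
  proof (clarify)
    fix q z bz assume q: "q \<in> Zs" and bz: "bz \<in> B z"
    have "(A z - A q) \<bullet> (z - q) \<ge> 0" by (rule A_mono)
    moreover have "(bz - (- A q)) \<bullet> (z - q) \<ge> 0" using q bz B_mono unfolding Zs_def by blast
    ultimately show "(A z + bz) \<bullet> (z - q) \<ge> 0" by (simp add: inner_simps)
  qed
qed (use maximal in blast)

lemma Zs_convex_closed: "convex Zs" "closed Zs"
proof -
  have e: "Zs = (\<Inter>(z,bz)\<in>{(z,bz). bz \<in> B z}. {q. (A z + bz) \<bullet> q \<le> (A z + bz) \<bullet> z})"
    unfolding Zs_char by (auto simp: inner_diff_right)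
  show "convex Zs" unfolding e by (rule convex_INT) (auto intro: convex_halfspace_le)
  show "closed Zs" unfolding e by (rule closed_INT) (auto intro: closed_halfspace_le)
qed

lemma cont_T: "continuous_on UNIV (T_FBF \<gamma> A B)"
proof -
  have "continuous_on UNIV (\<lambda>\<xi>. resolvent \<gamma> B (\<xi> - \<gamma> *\<^sub>R A \<xi>))"
    by (rule continuous_on_compose2[OF cont_res]) (auto intro!: continuous_intros cont_A)
  hence "continuous_on UNIV (\<lambda>\<xi>. resolvent \<gamma> B (\<xi> - \<gamma> *\<^sub>R A \<xi>)
    - \<gamma> *\<^sub>R A (resolvent \<gamma> B (\<xi> - \<gamma> *\<^sub>R A \<xi>)) + \<gamma> *\<^sub>R A \<xi>)"
    by (auto intro!: continuous_intros cont_A continuous_on_compose2[OF cont_A])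
  thus ?thesis unfolding T_eq[abs_def] by simp
qed

lemma cont_Ta: "continuous_on UNIV (T_alpha \<alpha> (T_FBF \<gamma> A B))"
  unfolding T_alpha_def[abs_def] by (auto intro!: continuous_intros cont_T)

end


lemma cesaro0:
  fixes f :: "nat \<Rightarrow> real"
  assumes f0: "\<And>n. f n \<ge> 0" and lim: "f \<longlonglongrightarrow> 0"
  shows "(\<lambda>N. (\<Sum>n<Suc N. f n) / real (Suc N)) \<longlonglongrightarrow> 0"
proof (rule LIMSEQ_I)
  fix r :: real assume r: "r > 0"
  from LIMSEQ_D[OF lim, of "r/2"] r obtain N0 where N0: "\<And>n. n \<ge> N0 \<Longrightarrow> norm (f n) < r/2" by auto
  define S0 where "S0 = (\<Sum>n<N0. f n)"
  have S0: "S0 \<ge> 0" unfolding S0_def using f0 by (simp add: sum_nonneg)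
  obtain N1 :: nat where N1: "real N1 > 2 * S0 / r" using reals_Archimedean2 by blast
  show "\<exists>no. \<forall>N\<ge>no. norm ((\<Sum>n<Suc N. f n) / real (Suc N) - 0) < r"
  proof (intro exI allI impI)
    fix N assume N: "N \<ge> max N0 N1"
    have split: "(\<Sum>n<Suc N. f n) = S0 + (\<Sum>n\<in>{N0..<Suc N}. f n)"
      unfolding S0_def using N by (metis atLeast0LessThan le_SucI max.bounded_iff sum.atLeastLessThan_concat zero_le lessThan_atLeast0)
    have fl: "\<And>n. n \<ge> N0 \<Longrightarrow> f n \<le> r/2" using N0 f0 by (metis abs_of_nonneg less_imp_le real_norm_def)
    have "(\<Sum>n\<in>{N0..<Suc N}. f n) \<le> (\<Sum>n\<in>{N0..<Suc N}. r/2)"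
    proof (rule sum_mono)
      fix n assume "n \<in> {N0..<Suc N}" thus "f n \<le> r/2" using fl by auto
    qed
    also have "\<dots> \<le> real (Suc N) * (r/2)" using r by simp
    finally have "(\<Sum>n<Suc N. f n) \<le> S0 + real (Suc N) * (r/2)" using split by simp
    moreover have "S0 < real (Suc N) * (r/2)"
    proof -
      have "2 * S0 / r < real (Suc N)" using N1 N by linarith
      thus ?thesis using r by (simp add: field_simps)
    qed
    ultimately have lt: "(\<Sum>n<Suc N. f n) < real (Suc N) * r" by linarith
    have nn: "(\<Sum>n<Suc N. f n) \<ge> 0" using f0 by (simp add: sum_nonneg)
    show "norm ((\<Sum>n<Suc N. f n) / real (Suc N) - 0) < r"
      using lt nn by (simp add: field_simps)
  qed
qed

lemma nonsummable_unbounded: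
  fixes f :: "nat \<Rightarrow> real"
  assumes f0: "\<And>n. f n \<ge> 0" and ns: "\<not> summable f"
  shows "\<exists>k. (\<Sum>j<k. f (j + m)) > X"
proof (rule ccontr)
  assume "\<not> ?thesis"
  hence "\<And>k. (\<Sum>j<k. f (j + m)) \<le> X" by (simp add: not_less)
  hence "summable (\<lambda>j. f (j + m))" by (intro summableI_nonneg_bounded) (use f0 in auto)
  with ns show False by simp
qed

lemma compact_bound:
  fixes g :: "'a::topological_space \<Rightarrow> real"
  assumes "compact S" "continuous_on S g"
  shows "\<exists>M. \<forall>x\<in>S. \<bar>g x\<bar> \<le> M"
proof -
  have "bounded (g ` S)" using compact_continuous_image[OF assms(2,1)] compact_imp_bounded by blast
  then obtain M where "\<forall>y\<in>g ` S. norm y \<le> M" unfolding bounded_iff by blast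
  thus ?thesis by auto
qed

lemma div_aux: "(v::real) = X / n \<Longrightarrow> c * X \<le> R \<Longrightarrow> c > 0 \<Longrightarrow> n > 0 \<Longrightarrow> v \<le> R / (c * n)"
  by (simp add: field_simps)

lemma div_aux2: "(n::real) > 0 \<Longrightarrow> c \<noteq> 0 \<Longrightarrow> (a + Q * S) / (c * n) = (a * (1 / n) + Q * (S / n)) / c"
  by (simp add: field_simps)

lemma step_id: "norm (y - l *\<^sub>R v - z)^2 = norm (y - z)^2 - 2*l*(v \<bullet> (y - z)) + l^2 * norm (v::'a::real_inner)^2"
proof -
  have "y - l *\<^sub>R v - z = (y - z) - l *\<^sub>R v" by (simp add: algebra_simps)
  thus ?thesis by (simp only: nsq_diff_scale)
qed

locale fbf_iter = fbf +
  fixes \<alpha> :: real and F :: "'a \<Rightarrow> 'a" and lam :: "nat \<Rightarrow> real" and \<xi> :: "nat \<Rightarrow> 'a"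
  assumes alpha: "0 < \<alpha>" "\<alpha> < 1"
    and F_cont: "continuous_on UNIV F"
    and lam_nn: "\<And>n. lam n \<ge> 0" and lam_lim: "lam \<longlonglongrightarrow> 0" and lam_ns: "\<not> summable lam"
    and iter: "\<And>n. \<xi> (Suc n) = T_alpha \<alpha> (T_FBF \<gamma> A B) (\<xi> n) - lam (Suc n) *\<^sub>R F (T_alpha \<alpha> (T_FBF \<gamma> A B) (\<xi> n))"
    and bdd: "bounded (range \<xi>)"
begin

abbreviation "Ta \<equiv> T_alpha \<alpha> (T_FBF \<gamma> A B)"
definition "K0 = closure (range \<xi>)"

lemma K0: "compact K0" "\<And>n. \<xi> n \<in> K0"
  unfolding K0_def using bdd apply simp
  by (meson closure_subset range_eqI subsetD)

lemma cont_FTa: "continuous_on UNIV (\<lambda>x. F (Ta x))"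
  by (rule continuous_on_compose2[OF F_cont cont_Ta]) auto

lemma lam_bdd: "\<exists>\<Lambda>. \<forall>n. lam n \<le> \<Lambda>"
proof -
  have "bounded (range lam)" using lam_lim by (intro convergent_imp_bounded) (auto simp: convergent_def)
  then obtain M where "\<forall>x\<in>range lam. norm x \<le> M" unfolding bounded_iff by blast
  hence "\<forall>n. lam n \<le> M" by (metis abs_le_D1 rangeI real_norm_def)
  thus ?thesis by blast
qed

lemma step_bound:
  "\<exists>Q. \<forall>n. norm (\<xi> (Suc n) - z)^2 \<le> norm (Ta (\<xi> n) - z)^2 + lam (Suc n) * Q"
proof -
  obtain \<Lambda> where L: "\<And>n. lam n \<le> \<Lambda>" using lam_bdd by blast
  have c1: "continuous_on K0 (\<lambda>x. F (Ta x) \<bullet> (Ta x - z))"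
    by (auto intro!: continuous_intros continuous_on_subset[OF cont_FTa] continuous_on_subset[OF cont_Ta])
  obtain H where H: "\<forall>x\<in>K0. \<bar>F (Ta x) \<bullet> (Ta x - z)\<bar> \<le> H"
    using compact_bound[OF K0(1) c1] by blast
  have c2: "continuous_on K0 (\<lambda>x. norm (F (Ta x))^2)"
    by (auto intro!: continuous_intros continuous_on_subset[OF cont_FTa])
  obtain M where M: "\<forall>x\<in>K0. \<bar>norm (F (Ta x))^2\<bar> \<le> M"
    using compact_bound[OF K0(1) c2] by blast
  have M0: "M \<ge> 0" using M K0(2)[of 0] by (meson abs_ge_zero order_trans)
  show ?thesis
  proof (intro exI allI)
    fix n
    let ?l = "lam (Suc n)" and ?y = "Ta (\<xi> n)"
    have e: "norm (\<xi> (Suc n) - z)^2 = norm (?y - z)^2 - 2*?l*(F ?y \<bullet> (?y - z)) + ?l^2 * norm (F ?y)^2"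
      unfolding iter by (rule step_id)
    have t1: "- 2*?l*(F ?y \<bullet> (?y - z)) \<le> ?l * (2*H)"
    proof -
      have "- (F ?y \<bullet> (?y - z)) \<le> H" using H K0(2)[of n] by (auto simp: abs_le_iff)
      hence "?l * (- (F ?y \<bullet> (?y - z))) \<le> ?l * H" using lam_nn[of "Suc n"] by (rule mult_left_mono)
      thus ?thesis by (simp add: mult.commute)
    qed
    have t2: "?l^2 * norm (F ?y)^2 \<le> ?l * (\<Lambda> * M)"
    proof -
      have "norm (F ?y)^2 \<le> M" using M K0(2)[of n] by auto
      have "?l * norm (F ?y)^2 \<le> \<Lambda> * M"
        by (rule mult_mono) (use \<open>norm (F ?y)^2 \<le> M\<close> L[of "Suc n"] lam_nn[of "Suc n"] in auto)
      thus ?thesis using lam_nn[of "Suc n"] by (simp add: power2_eq_square mult_left_mono mult.assoc)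
    qed
    show "norm (\<xi> (Suc n) - z)^2 \<le> norm (?y - z)^2 + ?l * (2*H + \<Lambda> * M)"
      using e t1 t2 by (simp add: algebra_simps)
  qed
qed

lemma Z_ne: "Zs \<noteq> {}"
proof -
  define p where "p n = resolvent \<gamma> B (\<xi> n - \<gamma> *\<^sub>R A (\<xi> n))" for n
  have cp: "continuous_on K0 (\<lambda>x. resolvent \<gamma> B (x - \<gamma> *\<^sub>R A x))"
    by (rule continuous_on_compose2[OF cont_res]) (auto intro!: continuous_intros continuous_on_subset[OF cont_A])
  obtain Pm where Pm: "\<forall>x\<in>K0. \<bar>norm (resolvent \<gamma> B (x - \<gamma> *\<^sub>R A x))\<bar> \<le> Pm"
    using compact_bound[OF K0(1) continuous_on_norm[OF cp]] by blast
  have pb: "\<And>n. norm (p n) \<le> Pm" using Pm K0(2) unfolding p_def by fastforce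
  define pb where "pb N = (1 / real (Suc N)) *\<^sub>R (\<Sum>n<Suc N. p n)" for N
  have "norm (pb N) \<le> Pm" for N
  proof -
    have "norm (\<Sum>n<Suc N. p n) \<le> (\<Sum>n<Suc N. norm (p n))" by (rule norm_sum)
    also have "\<dots> \<le> (\<Sum>n<Suc N. Pm)" by (rule sum_mono) (use pb in auto)
    finally have "norm (\<Sum>n<Suc N. p n) \<le> real (Suc N) * Pm" by simp
    moreover have "norm (pb N) = norm (\<Sum>n<Suc N. p n) / real (Suc N)"
      unfolding pb_def norm_scaleR by (simp del: sum.lessThan_Suc)
    ultimately have "real (Suc N) * norm (pb N) \<le> real (Suc N) * Pm"
      by (simp add: field_simps del: sum.lessThan_Suc)
    thus ?thesis by (meson mult_le_cancel_left_pos of_nat_0_less_iff zero_less_Suc)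
  qed
  hence "bounded (range pb)" unfolding bounded_iff by blast
  then obtain q r where r: "strict_mono r" "(pb \<circ> r) \<longlonglongrightarrow> q"
    using bounded_imp_convergent_subsequence by blast
  have "q \<in> Zs"
  proof (rule maximal)
    fix z bz assume bz: "bz \<in> B z"
    define w where "w = A z + bz"
    define a where "a n = norm (\<xi> n - z)^2" for n
    obtain Q where Q: "\<And>n. norm (\<xi> (Suc n) - z)^2 \<le> norm (Ta (\<xi> n) - z)^2 + lam (Suc n) * Q"
      using step_bound by blast
    have ineq: "2*\<alpha>*\<gamma>*(w \<bullet> (p n - z)) \<le> a n - a (Suc n) + lam (Suc n) * Q" for n
      using Ta_ineq_gen[OF bz, of \<alpha> "\<xi> n"] alpha Q[of n] unfolding a_def w_def p_def by simp
    have sineq: "2*\<alpha>*\<gamma>*(\<Sum>n<N. w \<bullet> (p n - z)) \<le> a 0 + Q * (\<Sum>n<N. lam (Suc n))" for N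
    proof -
      have "2*\<alpha>*\<gamma>*(\<Sum>n<N. w \<bullet> (p n - z)) = (\<Sum>n<N. 2*\<alpha>*\<gamma>*(w \<bullet> (p n - z)))"
        by (simp add: sum_distrib_left)
      also have "\<dots> \<le> (\<Sum>n<N. (a n - a (Suc n)) + lam (Suc n) * Q)"
        by (rule sum_mono) (use ineq in auto)
      also have "\<dots> = (\<Sum>n<N. a n - a (Suc n)) + Q * (\<Sum>n<N. lam (Suc n))"
        by (simp add: sum.distrib sum_distrib_left mult.commute)
      also have "(\<Sum>n<N. a n - a (Suc n)) = a 0 - a N"
        using sum_lessThan_telescope[of "\<lambda>n. - a n" N] by (simp add: algebra_simps)
      finally show ?thesis unfolding a_def using zero_le_power2[of "norm (\<xi> N - z)"] by linarith
    qed
    define bnd where "bnd N = (a 0 + Q * (\<Sum>n<Suc N. lam (Suc n))) / (2*\<alpha>*\<gamma>*real (Suc N))" for N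
    have cpos: "2*\<alpha>*\<gamma> > 0" using alpha g_pos by simp
    have le: "w \<bullet> (pb N - z) \<le> bnd N" for N
    proof -
      have s1: "(\<Sum>n<Suc N. p n - z) = (\<Sum>n<Suc N. p n) - real (Suc N) *\<^sub>R z"
        by (simp only: sum_subtractf sum_constant_scaleR card_lessThan)
      have "pb N - z = (1 / real (Suc N)) *\<^sub>R (\<Sum>n<Suc N. p n - z)"
        unfolding pb_def s1 scaleR_right_diff_distrib by simp
      hence "w \<bullet> (pb N - z) = (\<Sum>n<Suc N. w \<bullet> (p n - z)) / real (Suc N)"
        by (simp add: inner_sum_right inner_add_right del: sum.lessThan_Suc)
      thus ?thesis unfolding bnd_def
        by (rule div_aux) (use sineq[of "Suc N"] cpos in auto)
    qed
    have "bnd \<longlonglongrightarrow> 0"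
    proof -
      have c: "(\<lambda>N. (\<Sum>n<Suc N. lam (Suc n)) / real (Suc N)) \<longlonglongrightarrow> 0"
        by (rule cesaro0) (use lam_nn lam_lim in \<open>auto simp: LIMSEQ_Suc\<close>)
      have i: "(\<lambda>N. 1 / real (Suc N)) \<longlonglongrightarrow> 0" by (rule LIMSEQ_Suc[OF lim_const_over_n])
      define g where "g N = (a 0 * (1 / real (Suc N)) + Q * ((\<Sum>n<Suc N. lam (Suc n)) / real (Suc N))) / (2*\<alpha>*\<gamma>)" for N
      have "g \<longlonglongrightarrow> (a 0 * 0 + Q * 0) / (2*\<alpha>*\<gamma>)"
        unfolding g_def by (intro tendsto_intros c i) (use cpos in auto)
      moreover have "bnd = g"
      proof
        fix N show "bnd N = g N" unfolding bnd_def g_def by (rule div_aux2) (use cpos in auto)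
      qed
      ultimately show ?thesis by simp
    qed
    hence b2: "(bnd \<circ> r) \<longlonglongrightarrow> 0" using LIMSEQ_subseq_LIMSEQ r(1) by blast
    have b1: "(\<lambda>j. w \<bullet> ((pb \<circ> r) j - z)) \<longlonglongrightarrow> w \<bullet> (q - z)"
      by (intro tendsto_intros r(2))
    have "w \<bullet> (q - z) \<le> 0"
      by (rule LIMSEQ_le[OF b1 b2]) (use le in auto)
    thus "(A z + bz) \<bullet> (z - q) \<ge> 0" unfolding w_def by (simp add: inner_diff_right)
  qed
  thus ?thesis by blast
qed

end

locale fbf_conv = fbf_iter +
  assumes Z_bdd: "bounded Zs"
    and F_mono: "\<And>x y. (F x - F y) \<bullet> (x - y) \<ge> 0"
    and F_para: "\<And>x y. (F x - F y) \<bullet> (x - y) = 0 \<Longrightarrow> F x = F y"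
begin

definition "S = VI_sol F Zs"

lemma Z_compact: "compact Zs"
  using Z_bdd Zs_convex_closed(2) by (simp add: compact_eq_bounded_closed)

lemma S_sub: "S \<subseteq> Zs" unfolding S_def VI_sol_def by auto

lemma S_ne: "S \<noteq> {}"
proof -
  let ?f = "\<lambda>x. closest_point Zs (x - F x)"
  have c: "continuous_on Zs ?f"
    by (rule continuous_on_compose2[OF continuous_on_closest_point[OF Zs_convex_closed Z_ne]])
       (auto intro!: continuous_intros continuous_on_subset[OF F_cont])
  have "?f \<in> Zs \<rightarrow> Zs" using closest_point_in_set[OF Zs_convex_closed(2) Z_ne] by auto
  then obtain x where x: "x \<in> Zs" "?f x = x"
    using brouwer[OF Z_compact Zs_convex_closed(1) Z_ne c] by blast
  have "F x \<bullet> (w - x) \<ge> 0" if w: "w \<in> Zs" for w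
  proof -
    have "(x - F x - x) \<bullet> (w - x) \<le> 0"
      using any_closest_point_dot[OF Zs_convex_closed x(1) w, of "x - F x"]
        closest_point_exists(2)[OF Zs_convex_closed(2) Z_ne, of "x - F x"] x(2) by simp
    thus ?thesis by (simp add: inner_minus_left)
  qed
  with x(1) have "x \<in> S" unfolding S_def VI_sol_def by auto
  thus ?thesis by blast
qed

lemma S_closed: "closed S"
proof -
  have "S = Zs \<inter> (\<Inter>w\<in>Zs. {v. 0 \<le> F v \<bullet> (w - v)})" unfolding S_def VI_sol_def by auto
  moreover have "closed {v. 0 \<le> F v \<bullet> (w - v)}" for w
    by (rule closed_Collect_le) (auto intro!: continuous_intros F_cont)
  ultimately show ?thesis using Zs_convex_closed(2) by (auto intro!: closed_Int closed_INT)
qed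

lemma S_compact: "compact S"
  using S_closed S_sub Z_compact compact_Int_closed[of Zs S] by (simp add: Int_absorb1)

lemma para:
  assumes z: "z \<in> S" and x: "x \<in> Zs" and h: "F x \<bullet> (x - z) \<le> 0"
  shows "x \<in> S"
proof -
  have z1: "F z \<bullet> (x - z) \<ge> 0" using z x unfolding S_def VI_sol_def by auto
  have m: "(F x - F z) \<bullet> (x - z) \<ge> 0" by (rule F_mono)
  hence "(F x - F z) \<bullet> (x - z) = 0" using h z1 by (simp add: inner_diff_left)
  hence e: "F x = F z" by (rule F_para)
  have e2: "F z \<bullet> (x - z) = 0" using h z1 e by simp
  have "F x \<bullet> (w - x) \<ge> 0" if w: "w \<in> Zs" for w
  proof -
    have "F z \<bullet> (w - z) \<ge> 0" using z w unfolding S_def VI_sol_def by auto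
    moreover have "F x \<bullet> (w - x) = F z \<bullet> (w - z) - F z \<bullet> (x - z)" using e by (simp add: inner_diff_right)
    ultimately show ?thesis using e2 by simp
  qed
  with x show ?thesis unfolding S_def VI_sol_def by auto
qed

lemma key:
  assumes e: "e > 0"
  shows "\<exists>\<delta>>0. \<forall>x\<in>K0. \<forall>z\<in>S. infdist x S \<ge> e \<longrightarrow>
           norm (Ta x - x) \<ge> \<delta> \<or> F (Ta x) \<bullet> (Ta x - z) \<ge> \<delta>"
proof -
  define W where "W = (K0 \<times> S) \<inter> {p. e \<le> infdist (fst p) S}"
  define g where "g p = max (norm (Ta (fst p) - fst p)) (F (Ta (fst p)) \<bullet> (Ta (fst p) - snd p))" for p
  show ?thesis
  proof (cases "W = {}")
    case True
    thus ?thesis unfolding W_def by (intro exI[of _ 1]) auto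
  next
    case False
    have cW: "compact W" unfolding W_def
      by (rule compact_Int_closed[OF compact_Times[OF K0(1) S_compact]])
         (rule closed_Collect_le, auto intro!: continuous_intros)
    have cg: "continuous_on W g" unfolding g_def
      by (auto intro!: continuous_intros continuous_on_subset[OF cont_FTa] continuous_on_subset[OF cont_Ta]
            continuous_on_compose2[OF cont_FTa] continuous_on_compose2[OF cont_Ta])
    obtain p0 where p0: "p0 \<in> W" "\<And>p. p \<in> W \<Longrightarrow> g p0 \<le> g p"
      using continuous_attains_inf[OF cW False cg] by blast
    obtain x0 z0 where xz: "p0 = (x0, z0)" by force
    have x0: "x0 \<in> K0" "z0 \<in> S" "e \<le> infdist x0 S" using p0(1) xz unfolding W_def by auto
    have gpos: "g p0 > 0"
    proof (rule ccontr)
      assume ng: "\<not> g p0 > 0"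
      have mx: "max (norm (Ta x0 - x0)) (F (Ta x0) \<bullet> (Ta x0 - z0)) \<le> 0"
        using ng unfolding g_def xz fst_conv snd_conv not_less .
      hence h: "F (Ta x0) \<bullet> (Ta x0 - z0) \<le> 0" by (metis max.bounded_iff)
      from mx have "norm (Ta x0 - x0) \<le> 0" by (metis max.bounded_iff)
      hence fx: "Ta x0 = x0" by simp
      hence "x0 \<in> Zs" using fix_Ta[of \<alpha> x0] alpha by simp
      from para[OF x0(2) this] h fx have "x0 \<in> S" by simp
      hence "infdist x0 S = 0" by simp
      with x0(3) e show False by simp
    qed
    show ?thesis
    proof (intro exI[of _ "g p0"] conjI gpos ballI impI)
      fix x z assume "x \<in> K0" "z \<in> S" "e \<le> infdist x S"
      hence "(x, z) \<in> W" unfolding W_def by auto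
      hence "g p0 \<le> g (x, z)" by (rule p0(2))
      thus "g p0 \<le> norm (Ta x - x) \<or> g p0 \<le> F (Ta x) \<bullet> (Ta x - z)"
        unfolding g_def by (simp add: le_max_iff_disj)
    qed
  qed
qed

lemma rec_ineq:
  assumes M: "\<forall>x\<in>K0. \<bar>norm (F (Ta x))^2\<bar> \<le> M"
  shows "\<exists>z\<in>S. (infdist (\<xi> (Suc n)) S)^2 \<le> (infdist (\<xi> n) S)^2
           - ((1-\<alpha>)/\<alpha>) * norm (Ta (\<xi> n) - \<xi> n)^2
           - 2 * lam (Suc n) * (F (Ta (\<xi> n)) \<bullet> (Ta (\<xi> n) - z)) + (lam (Suc n))^2 * M"
proof -
  obtain z where z: "z \<in> S" "infdist (\<xi> n) S = dist (\<xi> n) z"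
    using infdist_attains_inf[OF S_closed S_ne] by blast
  let ?y = "Ta (\<xi> n)" and ?l = "lam (Suc n)"
  have "infdist (\<xi> (Suc n)) S \<le> dist (\<xi> (Suc n)) z" by (rule infdist_le[OF z(1)])
  hence "(infdist (\<xi> (Suc n)) S)^2 \<le> (dist (\<xi> (Suc n)) z)^2"
    by (simp add: power_mono infdist_nonneg)
  also have "\<dots> = norm (?y - z)^2 - 2*?l*(F ?y \<bullet> (?y - z)) + ?l^2 * norm (F ?y)^2"
    unfolding dist_norm iter by (rule step_id)
  also have "norm (?y - z)^2 \<le> norm (\<xi> n - z)^2 - ((1-\<alpha>)/\<alpha>) * norm (?y - \<xi> n)^2"
    using Ta_ineq[of z \<alpha> "\<xi> n"] z(1) S_sub alpha by auto
  also have "norm (\<xi> n - z) = infdist (\<xi> n) S" using z(2) by (simp add: dist_norm)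
  also have "?l^2 * norm (F ?y)^2 \<le> ?l^2 * M"
    using M K0(2)[of n] by (intro mult_left_mono) auto
  finally show ?thesis using z(1) by (auto simp: algebra_simps)
qed

end


context fbf_conv begin

lemma conv: "(\<lambda>n. infdist (\<xi> n) S) \<longlonglongrightarrow> 0"
proof -
  define r where "r n = infdist (\<xi> n) S" for n
  define a where "a n = (r n)^2" for n
  define c where "c = (1-\<alpha>)/\<alpha>"
  have c: "c > 0" unfolding c_def using alpha by simp
  have r0: "r n \<ge> 0" for n unfolding r_def by (rule infdist_nonneg)
  have a0: "a n \<ge> 0" for n unfolding a_def by simp
  have c1: "continuous_on (K0 \<times> S) (\<lambda>p. F (Ta (fst p)) \<bullet> (Ta (fst p) - snd p))"
    by (auto intro!: continuous_intros continuous_on_compose2[OF cont_FTa] continuous_on_compose2[OF cont_Ta])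
  obtain H where H: "\<forall>p\<in>K0 \<times> S. \<bar>F (Ta (fst p)) \<bullet> (Ta (fst p) - snd p)\<bar> \<le> H"
    using compact_bound[OF compact_Times[OF K0(1) S_compact] c1] by blast
  have c2: "continuous_on K0 (\<lambda>x. norm (F (Ta x))^2)"
    by (auto intro!: continuous_intros continuous_on_subset[OF cont_FTa])
  obtain M where M: "\<forall>x\<in>K0. \<bar>norm (F (Ta x))^2\<bar> \<le> M"
    using compact_bound[OF K0(1) c2] by blast
  have M0: "M \<ge> 0" using M K0(2)[of 0] by (meson abs_ge_zero order_trans)
  obtain s0 where "s0 \<in> S" using S_ne by blast
  hence "(\<xi> 0, s0) \<in> K0 \<times> S" using K0(2)[of 0] by simp
  from H[rule_format, OF this] have H0: "H \<ge> 0" by (meson abs_ge_zero order_trans)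
  define H' where "H' = 2*H + M + 1"
  have H'pos: "H' > 0" unfolding H'_def using H0 M0 by simp
  have hb: "\<bar>F (Ta (\<xi> n)) \<bullet> (Ta (\<xi> n) - z)\<bar> \<le> H" if "z \<in> S" for n z
  proof -
    have "(\<xi> n, z) \<in> K0 \<times> S" using K0(2)[of n] that by simp
    from H[rule_format, OF this] show ?thesis by simp
  qed
  have rec: "\<exists>z\<in>S. a (Suc n) \<le> a n - c * norm (Ta (\<xi> n) - \<xi> n)^2
           - 2 * lam (Suc n) * (F (Ta (\<xi> n)) \<bullet> (Ta (\<xi> n) - z)) + (lam (Suc n))^2 * M" for n
    using rec_ineq[OF M, of n] unfolding a_def r_def c_def by blast
  show ?thesis
  proof (rule LIMSEQ_I)
    fix \<epsilon> :: real assume eps: "\<epsilon> > 0"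
    define e where "e = \<epsilon>/2"
    have e: "e > 0" unfolding e_def using eps by simp
    obtain \<delta> where \<delta>: "\<delta> > 0" and kd: "\<And>x z. x \<in> K0 \<Longrightarrow> z \<in> S \<Longrightarrow> infdist x S \<ge> e \<Longrightarrow>
           norm (Ta x - x) \<ge> \<delta> \<or> F (Ta x) \<bullet> (Ta x - z) \<ge> \<delta>"
      using key[OF e] by blast
    define \<eta> where "\<eta> = \<epsilon>^2 / (4*H')"
    have \<eta>: "\<eta> > 0" unfolding \<eta>_def using eps H'pos by simp
    define \<tau> where "\<tau> = min 1 (min \<eta> (min (c*\<delta>^2/(H'+\<delta>)) (\<delta>/H')))"
    have \<tau>: "\<tau> > 0" unfolding \<tau>_def using \<eta> c \<delta> H'pos by simp
    have tl: "\<tau> \<le> 1" "\<tau> \<le> \<eta>" "\<tau> \<le> c*\<delta>^2/(H'+\<delta>)" "\<tau> \<le> \<delta>/H'"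
      unfolding \<tau>_def by linarith+
    obtain N1 where N1': "\<forall>n\<ge>N1. norm (lam n - 0) < \<tau>"
      using LIMSEQ_D[OF lam_lim \<tau>] by blast
    have N1: "lam n < \<tau>" if "n \<ge> N1" for n
      using N1' that abs_ge_self[of "lam n"] by force
    have inc: "a (Suc n) \<le> a n + H' * lam (Suc n)" if n: "n \<ge> N1" for n
    proof -
      obtain z where z: "z \<in> S" and rz: "a (Suc n) \<le> a n - c * norm (Ta (\<xi> n) - \<xi> n)^2
           - 2 * lam (Suc n) * (F (Ta (\<xi> n)) \<bullet> (Ta (\<xi> n) - z)) + (lam (Suc n))^2 * M"
        using rec[of n] by blast
      define l where "l = lam (Suc n)"
      define h where "h = F (Ta (\<xi> n)) \<bullet> (Ta (\<xi> n) - z)"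
      define D where "D = c * norm (Ta (\<xi> n) - \<xi> n)^2"
      have rz': "a (Suc n) \<le> a n - D - 2 * l * h + l^2 * M" using rz unfolding l_def h_def D_def .
      have lt: "l < \<tau>" unfolding l_def using N1 n by simp
      have l: "0 \<le> l" "l \<le> 1" using lam_nn[of "Suc n"] lt tl(1) unfolding l_def by linarith+
      have t1: "D \<ge> 0" unfolding D_def using c by simp
      have hh: "- h \<le> H" using hb[OF z, of n] unfolding h_def by (simp add: abs_le_iff)
      have t2: "(2*l) * (- h) \<le> (2*l) * H" using l hh by (intro mult_left_mono) auto
      have t3: "l^2 * M \<le> l * M" using l M0 by (simp add: power2_eq_square mult_right_mono mult_left_le_one_le)
      have t4: "l * M \<le> l * (M + 1)" using l by (intro mult_left_mono) auto
      have e1: "(2*l) * (- h) = - (2 * l * h)" by simp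
      have e2: "H' * l = (2*l) * H + l * (M + 1)" unfolding H'_def by (simp add: algebra_simps)
      show ?thesis unfolding l_def[symmetric] e2 using rz' t1 t2 t3 t4 e1 by linarith
    qed
    have dec: "a (Suc n) \<le> a n - \<delta> * lam (Suc n)" if n: "n \<ge> N1" and rn: "r n \<ge> e" for n
    proof -
      obtain z where z: "z \<in> S" and rz: "a (Suc n) \<le> a n - c * norm (Ta (\<xi> n) - \<xi> n)^2
           - 2 * lam (Suc n) * (F (Ta (\<xi> n)) \<bullet> (Ta (\<xi> n) - z)) + (lam (Suc n))^2 * M"
        using rec[of n] by blast
      define l where "l = lam (Suc n)"
      define h where "h = F (Ta (\<xi> n)) \<bullet> (Ta (\<xi> n) - z)"
      define d where "d = norm (Ta (\<xi> n) - \<xi> n)"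
      have rz': "a (Suc n) \<le> a n - c * d^2 - 2 * l * h + l^2 * M" using rz unfolding l_def h_def d_def .
      have lt: "l < \<tau>" unfolding l_def using N1 n by simp
      have l: "0 \<le> l" "l \<le> 1" "l \<le> \<delta>/H'" "l \<le> c*\<delta>^2/(H'+\<delta>)"
        using lam_nn[of "Suc n"] lt tl unfolding l_def by linarith+
      have hh: "- h \<le> H" using hb[OF z, of n] unfolding h_def by (simp add: abs_le_iff)
      have t3: "l^2 * M \<le> l * M" using l M0 by (simp add: power2_eq_square mult_right_mono mult_left_le_one_le)
      have cases: "d \<ge> \<delta> \<or> h \<ge> \<delta>"
        using kd[OF K0(2)[of n] z] rn unfolding r_def d_def h_def by blast
      have goal: "a (Suc n) \<le> a n - \<delta> * l"
        using cases
      proof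
        assume dd: "d \<ge> \<delta>"
        have t0: "c * \<delta>^2 \<le> c * d^2" using dd \<delta> c by (intro mult_left_mono power_mono) auto
        have t2: "(2*l) * (- h) \<le> (2*l) * H" using l hh by (intro mult_left_mono) auto
        have k: "l * (H' + \<delta>) \<le> c * \<delta>^2"
          using l(4) H'pos \<delta> by (simp add: pos_le_divide_eq)
        have t4: "l * M \<le> l * (M + 1)" using l by (intro mult_left_mono) auto
        have e1: "(2*l) * (- h) = - (2 * l * h)" by simp
        have e2: "l * (H' + \<delta>) = (2*l) * H + l * (M + 1) + \<delta> * l" unfolding H'_def by (simp add: algebra_simps)
        show ?thesis using rz' t0 t2 k t3 t4 e1 e2 by linarith
      next
        assume hd: "h \<ge> \<delta>"
        have t2: "(2*l) * \<delta> \<le> (2*l) * h" using hd l by (intro mult_left_mono) auto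
        have k: "l * H' \<le> \<delta>" using l(3) H'pos by (simp add: pos_le_divide_eq)
        have t5: "l * M \<le> l * H'" unfolding H'_def using l H0 by (intro mult_left_mono) auto
        have t6: "l * (l * M) \<le> l * \<delta>" using l k t5 by (intro mult_left_mono) auto
        have e3: "l^2 * M = l * (l * M)" by (simp add: power2_eq_square)
        have e4: "(2*l) * \<delta> = 2 * (\<delta> * l)" "(2*l) * h = 2 * l * h" "l * \<delta> = \<delta> * l" by simp_all
        have t7: "c * d^2 \<ge> 0" using c by simp
        show ?thesis using rz' t2 t3 t6 e3 e4 t7 by linarith
      qed
      thus ?thesis unfolding l_def .
    qed
    have claimA: "\<exists>N2\<ge>N1. r N2 < e"
    proof (rule ccontr)
      assume "\<not> ?thesis"
      hence ge: "\<And>n. n \<ge> N1 \<Longrightarrow> r n \<ge> e" by (meson not_le)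
      have ind: "a (N1 + k) \<le> a N1 - \<delta> * (\<Sum>j<k. lam (j + Suc N1))" for k
      proof (induction k)
        case 0 thus ?case by simp
      next
        case (Suc k)
        have "a (Suc (N1 + k)) \<le> a (N1 + k) - \<delta> * lam (Suc (N1 + k))"
          by (rule dec) (auto intro: ge)
        also have "lam (Suc (N1 + k)) = lam (k + Suc N1)" by (simp add: add.commute)
        finally show ?case using Suc.IH by (simp add: algebra_simps)
      qed
      obtain k where k: "(\<Sum>j<k. lam (j + Suc N1)) > a N1 / \<delta>"
        using nonsummable_unbounded[OF lam_nn lam_ns] by blast
      hence "\<delta> * (\<Sum>j<k. lam (j + Suc N1)) > a N1" using \<delta> by (simp add: field_simps)
      with ind[of k] a0[of "N1 + k"] show False by linarith
    qed
    then obtain N2 where N2: "N2 \<ge> N1" "r N2 < e" by blast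
    have claimB: "a n \<le> e^2 + \<eta> * H'" if "n \<ge> N2" for n
      using that
    proof (induction n rule: dec_induct)
      case base
      have "a N2 \<le> e^2" unfolding a_def using N2(2) r0[of N2] by (simp add: power_mono)
      moreover have "\<eta> * H' \<ge> 0" using \<eta> H'pos by simp
      ultimately show ?case by linarith
    next
      case (step n)
      have nN1: "n \<ge> N1" using step(1) N2(1) by simp
      show ?case
      proof (cases "r n < e")
        case True
        have "a n \<le> e^2" unfolding a_def using True r0[of n] by (simp add: power_mono)
        moreover have "H' * lam (Suc n) \<le> \<eta> * H'"
        proof -
          have "lam (Suc n) \<le> \<eta>" using N1[of "Suc n"] nN1 tl(2) by simp
          thus ?thesis using H'pos by (simp add: mult.commute mult_left_mono)
        qed
        ultimately show ?thesis using inc[OF nN1] by linarith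
      next
        case False
        hence "a (Suc n) \<le> a n - \<delta> * lam (Suc n)" using dec[OF nN1] by simp
        moreover have "\<delta> * lam (Suc n) \<ge> 0" using \<delta> lam_nn[of "Suc n"] by simp
        ultimately show ?thesis using step(3) by linarith
      qed
    qed
    show "\<exists>N. \<forall>n\<ge>N. norm (infdist (\<xi> n) S - 0) < \<epsilon>"
    proof (intro exI allI impI)
      fix n assume "n \<ge> N2"
      hence "a n \<le> e^2 + \<eta> * H'" by (rule claimB)
      also have "e^2 + \<eta> * H' = \<epsilon>^2 / 2" unfolding e_def \<eta>_def using H'pos by (simp add: field_simps power2_eq_square)
      also have "\<dots> < \<epsilon>^2" using eps by simp
      finally have "(r n)^2 < \<epsilon>^2" unfolding a_def .
      hence "r n < \<epsilon>" using eps r0[of n] by (simp add: power_less_imp_less_base)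
      thus "norm (infdist (\<xi> n) S - 0) < \<epsilon>" unfolding r_def by (simp add: infdist_nonneg)
    qed
  qed
qed

end


section \<open>Orthogonal decomposition\<close>

definition "Cbox m P C = {x. \<forall>i\<in>{1..m}. P i x \<in> C i}"

context
  fixes m :: nat and P :: "nat \<Rightarrow> 'a::euclidean_space \<Rightarrow> 'a"
  assumes dec: "orth_decomp m P"
begin

lemma od_lin: "i \<in> {1..m} \<Longrightarrow> linear (P i)" using dec unfolding orth_decomp_def by blast
lemma od_idem: "i \<in> {1..m} \<Longrightarrow> P i (P i x) = P i x" using dec unfolding orth_decomp_def by blast
lemma od_sa: "i \<in> {1..m} \<Longrightarrow> P i x \<bullet> y = x \<bullet> P i y" using dec unfolding orth_decomp_def by blast
lemma od_orth: "i \<in> {1..m} \<Longrightarrow> j \<in> {1..m} \<Longrightarrow> i \<noteq> j \<Longrightarrow> P i (P j x) = 0" using dec unfolding orth_decomp_def by blast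
lemma od_sum: "(\<Sum>i\<in>{1..m}. P i x) = x" using dec unfolding orth_decomp_def by blast

lemma od_inner: "a \<bullet> y = (\<Sum>i\<in>{1..m}. P i a \<bullet> P i y)"
proof -
  have "a \<bullet> y = a \<bullet> (\<Sum>i\<in>{1..m}. P i y)" by (metis od_sum)
  also have "\<dots> = (\<Sum>i\<in>{1..m}. a \<bullet> P i y)" by (rule inner_sum_right)
  also have "\<dots> = (\<Sum>i\<in>{1..m}. P i a \<bullet> P i y)"
    by (rule sum.cong) (auto simp: od_sa od_idem)
  finally show ?thesis .
qed

lemma od_range: "i \<in> {1..m} \<Longrightarrow> c \<in> range (P i) \<Longrightarrow> P i c = c"
  using od_idem by auto

lemma od_range_other: "i \<in> {1..m} \<Longrightarrow> j \<in> {1..m} \<Longrightarrow> i \<noteq> j \<Longrightarrow> c \<in> range (P j) \<Longrightarrow> P i c = 0"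
  using od_orth by auto

lemma repl_in_Cbox:
  assumes C: "\<forall>i\<in>{1..m}. C i \<subseteq> range (P i)"
    and x: "x \<in> Cbox m P C" and i: "i \<in> {1..m}" and c: "c \<in> C i"
  shows "x - P i x + c \<in> Cbox m P C"
  unfolding Cbox_def mem_Collect_eq
proof (intro ballI)
  fix j assume j: "j \<in> {1..m}"
  have cr: "c \<in> range (P i)" using C c i by blast
  have e: "P j (x - P i x + c) = P j x - P j (P i x) + P j c"
    using od_lin[OF j] by (simp add: linear_diff linear_add)
  show "P j (x - P i x + c) \<in> C j"
  proof (cases "j = i")
    case True
    thus ?thesis using e od_idem[OF i] od_range[OF i cr] c by simp
  next
    case False
    thus ?thesis using e od_orth[OF j i False] od_range_other[OF j i False cr] x j unfolding Cbox_def by simp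
  qed
qed

lemma Cbox_props:
  assumes C: "\<forall>i\<in>{1..m}. C i \<subseteq> range (P i) \<and> C i \<noteq> {} \<and> closed (C i) \<and> convex (C i)"
  shows "Cbox m P C \<noteq> {}" "closed (Cbox m P C)" "convex (Cbox m P C)"
proof -
  have eq: "Cbox m P C = (\<Inter>i\<in>{1..m}. P i -` C i)" unfolding Cbox_def by auto
  have cl: "closed (P i -` C i)" if i: "i \<in> {1..m}" for i
  proof (rule continuous_closed_vimage)
    show "closed (C i)" using C i by blast
    have "bounded_linear (P i)" using od_lin[OF i] by (simp add: linear_conv_bounded_linear)
    thus "continuous (at x) (P i)" for x by (rule linear_continuous_at)
  qed
  show "closed (Cbox m P C)" unfolding eq by (rule closed_INT) (use cl in blast)
  show "convex (Cbox m P C)" unfolding eq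
  proof (rule convex_INT)
    fix i assume i: "i \<in> {1..m}"
    show "convex (P i -` C i)" using C i od_lin[OF i] by (intro convex_linear_vimage) auto
  qed
  define c where "c i = (SOME y. y \<in> C i)" for i
  have c: "c i \<in> C i" if "i \<in> {1..m}" for i using C that unfolding c_def by (metis some_in_eq)
  define x where "x = (\<Sum>i\<in>{1..m}. c i)"
  have "P j x = c j" if j: "j \<in> {1..m}" for j
  proof -
    have "P j x = (\<Sum>i\<in>{1..m}. P j (c i))" unfolding x_def using od_lin[OF j] by (simp add: linear_sum)
    also have "\<dots> = (\<Sum>i\<in>{1..m}. if i = j then c j else 0)"
    proof (rule sum.cong)
      fix i assume i: "i \<in> {1..m}"
      have cr: "c i \<in> range (P i)" using C c[OF i] i by blast
      show "P j (c i) = (if i = j then c j else 0)"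
      proof (cases "i = j")
        case True
        hence "c i \<in> range (P j)" using cr by simp
        hence "P j (c i) = c i" by (rule od_range[OF j])
        thus ?thesis using True by simp
      next
        case False
        have "P j (c i) = 0" by (rule od_range_other[OF j i]) (use False cr in auto)
        thus ?thesis using False by simp
      qed
    qed simp
    also have "\<dots> = c j" using j by simp
    finally show ?thesis .
  qed
  hence "x \<in> Cbox m P C" unfolding Cbox_def using c by auto
  thus "Cbox m P C \<noteq> {}" by blast
qed

lemma normal_char:
  assumes C: "\<forall>i\<in>{1..m}. C i \<subseteq> range (P i)"
  shows "(\<forall>i\<in>{1..m}. P i a \<in> normal_cone (range (P i)) (C i) (P i x)) \<longleftrightarrow>
         x \<in> Cbox m P C \<and> (\<forall>c\<in>Cbox m P C. a \<bullet> (c - x) \<le> 0)"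
proof
  assume h: "\<forall>i\<in>{1..m}. P i a \<in> normal_cone (range (P i)) (C i) (P i x)"
  hence xi: "\<forall>i\<in>{1..m}. P i x \<in> C i" unfolding normal_cone_def by (auto split: if_splits)
  hence x: "x \<in> Cbox m P C" unfolding Cbox_def by simp
  have "a \<bullet> (c - x) \<le> 0" if c: "c \<in> Cbox m P C" for c
  proof -
    have "a \<bullet> (c - x) = (\<Sum>i\<in>{1..m}. P i a \<bullet> P i (c - x))" by (rule od_inner)
    also have "\<dots> \<le> (\<Sum>i\<in>{1..m}. 0)"
    proof (rule sum_mono)
      fix i assume i: "i \<in> {1..m}"
      have "P i (c - x) = P i c - P i x" using od_lin[OF i] by (simp add: linear_diff)
      moreover have "P i c \<in> C i" using c i unfolding Cbox_def by auto
      ultimately show "P i a \<bullet> P i (c - x) \<le> 0" using h i xi unfolding normal_cone_def by auto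
    qed
    finally show ?thesis by simp
  qed
  with x show "x \<in> Cbox m P C \<and> (\<forall>c\<in>Cbox m P C. a \<bullet> (c - x) \<le> 0)" by blast
next
  assume h: "x \<in> Cbox m P C \<and> (\<forall>c\<in>Cbox m P C. a \<bullet> (c - x) \<le> 0)"
  show "\<forall>i\<in>{1..m}. P i a \<in> normal_cone (range (P i)) (C i) (P i x)"
  proof
    fix i assume i: "i \<in> {1..m}"
    have xi: "P i x \<in> C i" using h i unfolding Cbox_def by auto
    have "P i a \<bullet> (c' - P i x) \<le> 0" if c': "c' \<in> C i" for c'
    proof -
      have cr: "c' \<in> range (P i)" using C c' i by blast
      have "x - P i x + c' - x = c' - P i x" by simp
      hence "a \<bullet> (c' - P i x) \<le> 0" using h repl_in_Cbox[OF C _ i c'] by fastforce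
      moreover have "P i (c' - P i x) = c' - P i x"
        using od_lin[OF i] od_idem[OF i] od_range[OF i cr] by (simp add: linear_diff)
      ultimately show ?thesis using od_sa[OF i, of a "c' - P i x"] by simp
    qed
    thus "P i a \<in> normal_cone (range (P i)) (C i) (P i x)" unfolding normal_cone_def using xi by auto
  qed
qed

end

lemma conj_iota: "conjugate (iota D) u = (SUP y\<in>D. ereal (y \<bullet> u))"
  unfolding conjugate_def
proof (rule antisym)
  show "(SUP y. ereal (y \<bullet> u) - iota D y) \<le> (SUP y\<in>D. ereal (y \<bullet> u))"
  proof (rule SUP_least)
    fix y show "ereal (y \<bullet> u) - iota D y \<le> (SUP y\<in>D. ereal (y \<bullet> u))"
    proof (cases "y \<in> D")
      case True
      have "ereal (y \<bullet> u) - iota D y = ereal (y \<bullet> u)" using True by (simp add: iota_def)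
      also have "\<dots> \<le> (SUP y\<in>D. ereal (y \<bullet> u))" by (rule SUP_upper[OF True])
      finally show ?thesis .
    next
      case False thus ?thesis unfolding iota_def by simp
    qed
  qed
  show "(SUP y\<in>D. ereal (y \<bullet> u)) \<le> (SUP y. ereal (y \<bullet> u) - iota D y)"
  proof (rule SUP_least)
    fix y assume "y \<in> D"
    hence "ereal (y \<bullet> u) = ereal (y \<bullet> u) - iota D y" unfolding iota_def by simp
    also have "\<dots> \<le> (SUP y. ereal (y \<bullet> u) - iota D y)" by (rule SUP_upper) simp
    finally show "ereal (y \<bullet> u) \<le> (SUP y. ereal (y \<bullet> u) - iota D y)" .
  qed
qed

lemma subdiff_char:
  fixes D :: "'g::euclidean_space set"
  assumes D: "D \<noteq> {}" "closed D" "convex D"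
  shows "b \<in> subdiff (conjugate (iota D)) u \<longleftrightarrow> b \<in> D \<and> (\<forall>e\<in>D. (e - b) \<bullet> u \<le> 0)"
proof
  assume h: "b \<in> D \<and> (\<forall>e\<in>D. (e - b) \<bullet> u \<le> 0)"
  have su: "conjugate (iota D) u = ereal (b \<bullet> u)"
    unfolding conj_iota
  proof (rule antisym)
    show "(SUP y\<in>D. ereal (y \<bullet> u)) \<le> ereal (b \<bullet> u)"
      by (rule SUP_least) (use h in \<open>auto simp: inner_diff_left\<close>)
    show "ereal (b \<bullet> u) \<le> (SUP y\<in>D. ereal (y \<bullet> u))" using h by (auto intro: SUP_upper)
  qed
  have "conjugate (iota D) u + ereal (b \<bullet> (w - u)) \<le> conjugate (iota D) w" for w
  proof -
    have "conjugate (iota D) u + ereal (b \<bullet> (w - u)) = ereal (b \<bullet> w)"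
      unfolding su by (simp add: inner_diff_right)
    also have "\<dots> \<le> conjugate (iota D) w" unfolding conj_iota using h by (auto intro: SUP_upper)
    finally show ?thesis .
  qed
  thus "b \<in> subdiff (conjugate (iota D)) u" unfolding subdiff_def su by simp
next
  assume h: "b \<in> subdiff (conjugate (iota D)) u"
  then obtain s where s: "conjugate (iota D) u = ereal s"
    unfolding subdiff_def by (cases "conjugate (iota D) u") auto
  have sg: "\<And>w. ereal s + ereal (b \<bullet> (w - u)) \<le> conjugate (iota D) w"
    using h unfolding subdiff_def s by auto
  have bD: "b \<in> D"
  proof (rule ccontr)
    assume "b \<notin> D"
    then obtain a \<beta> where ab: "a \<bullet> b < \<beta>" "\<forall>x\<in>D. a \<bullet> x > \<beta>"
      using separating_hyperplane_closed_point[OF D(3) D(2)] by blast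
    have up: "e \<bullet> u \<le> s" if "e \<in> D" for e
    proof -
      have "ereal (e \<bullet> u) \<le> conjugate (iota D) u" unfolding conj_iota using that by (rule SUP_upper)
      thus ?thesis unfolding s by simp
    qed
    have "conjugate (iota D) (u - a) \<le> ereal (s - \<beta>)"
      unfolding conj_iota
    proof (rule SUP_least)
      fix e assume e: "e \<in> D"
      have "e \<bullet> (u - a) = e \<bullet> u - a \<bullet> e" by (simp add: inner_diff_right inner_commute)
      also have "\<dots> \<le> s - \<beta>"
      proof -
        have "a \<bullet> e > \<beta>" using ab(2) e by blast
        thus ?thesis using up[OF e] by linarith
      qed
      finally show "ereal (e \<bullet> (u - a)) \<le> ereal (s - \<beta>)" by simp
    qed
    moreover have "ereal s + ereal (b \<bullet> (u - a - u)) \<le> conjugate (iota D) (u - a)" by (rule sg)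
    ultimately have "ereal s + ereal (b \<bullet> (u - a - u)) \<le> ereal (s - \<beta>)" by (rule order_trans[rotated])
    hence "s + b \<bullet> (u - a - u) \<le> s - \<beta>" by simp
    hence "- (a \<bullet> b) \<le> - \<beta>" by (simp add: inner_commute)
    with ab(1) show False by simp
  qed
  have up: "e \<bullet> u \<le> s" if "e \<in> D" for e
  proof -
    have "ereal (e \<bullet> u) \<le> conjugate (iota D) u" unfolding conj_iota using that by (rule SUP_upper)
    thus ?thesis unfolding s by simp
  qed
  have "conjugate (iota D) 0 = 0" unfolding conj_iota using D(1) by simp
  with sg[of 0] have "ereal s + ereal (b \<bullet> (0 - u)) \<le> 0" by simp
  hence "s + b \<bullet> (0 - u) \<le> 0" by (simp add: zero_ereal_def)
  hence "s \<le> b \<bullet> u" by simp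
  have "(e - b) \<bullet> u \<le> 0" if "e \<in> D" for e using up[OF that] \<open>s \<le> b \<bullet> u\<close> by (simp add: inner_diff_left)
  with bD show "b \<in> D \<and> (\<forall>e\<in>D. (e - b) \<bullet> u \<le> 0)" by blast
qed

lemma adjoint_bound:
  fixes L :: "'a::euclidean_space \<Rightarrow> 'g::euclidean_space"
  assumes L: "linear L"
  shows "norm (adjoint L u) \<le> onorm L * norm u"
proof -
  have bl: "bounded_linear L" using L by (simp add: linear_conv_bounded_linear)
  have "norm (adjoint L u)^2 = adjoint L u \<bullet> adjoint L u" by (simp add: power2_norm_eq_inner)
  also have "\<dots> = L (adjoint L u) \<bullet> u" by (rule adjoint_works[OF L])
  also have "\<dots> \<le> norm (L (adjoint L u)) * norm u" by (rule norm_cauchy_schwarz)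
  also have "\<dots> \<le> (onorm L * norm (adjoint L u)) * norm u"
    by (intro mult_right_mono onorm[OF bl]) auto
  finally have "norm (adjoint L u) * norm (adjoint L u) \<le> norm (adjoint L u) * (onorm L * norm u)"
    by (simp add: power2_eq_square algebra_simps)
  thus ?thesis
    by (cases "norm (adjoint L u) = 0") (auto simp: mult_le_cancel_left_pos onorm_pos_le[OF bl])
qed


lemma convex_affine_image:
  assumes S: "convex S" and h: "\<And>p q \<mu>. h (\<mu> *\<^sub>R p + (1 - \<mu>) *\<^sub>R q) = \<mu> *\<^sub>R h p + (1 - \<mu>) *\<^sub>R h q"
  shows "convex (h ` S)"
  unfolding convex_alt
proof (intro ballI allI impI)
  fix x y and \<mu> :: real assume x: "x \<in> h ` S" and y: "y \<in> h ` S" and mu: "0 \<le> \<mu> \<and> \<mu> \<le> 1"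
  obtain p q where p: "p \<in> S" "x = h p" and q: "q \<in> S" "y = h q" using x y by blast
  have "(1 - \<mu>) *\<^sub>R x + \<mu> *\<^sub>R y = h (\<mu> *\<^sub>R q + (1 - \<mu>) *\<^sub>R p)"
    unfolding h p(2) q(2) by (simp add: add.commute)
  moreover have "\<mu> *\<^sub>R q + (1 - \<mu>) *\<^sub>R p \<in> S"
    using S p(1) q(1) mu unfolding convex_alt by (metis add.commute)
  ultimately show "(1 - \<mu>) *\<^sub>R x + \<mu> *\<^sub>R y \<in> h ` S" by simp
qed

lemma multiplier:
  fixes L :: "'a::euclidean_space \<Rightarrow> 'g::euclidean_space" and G :: "'a \<Rightarrow> 'a"
  assumes L: "linear L" and Cc: "convex Cb" and Dc: "convex D"
    and y: "y \<in> Cb" "L y \<in> D" "\<forall>w\<in>Cb. L w \<in> D \<longrightarrow> G y \<bullet> (w - y) \<ge> 0"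
    and CQ: "\<And>d. (\<forall>w\<in>Cb. \<forall>e\<in>D. d \<bullet> (L w - e) \<le> 0) \<Longrightarrow> d = 0"
  shows "\<exists>v. (\<forall>c\<in>Cb. (- (G y + adjoint L v)) \<bullet> (c - y) \<le> 0) \<and> (\<forall>e\<in>D. (e - L y) \<bullet> v \<le> 0)"
proof -
  define h :: "'a \<times> 'g \<times> real \<Rightarrow> 'g \<times> real" where "h = (\<lambda>(w,e,t). (L w - e, G y \<bullet> (w - y) + t))"
  define W1 where "W1 = h ` (Cb \<times> D \<times> {0..})"
  define W2 :: "('g \<times> real) set" where "W2 = (\<lambda>s. (0, s)) ` {..<0}"
  have hlin: "h (\<mu> *\<^sub>R p + (1 - \<mu>) *\<^sub>R q) = \<mu> *\<^sub>R h p + (1 - \<mu>) *\<^sub>R h q" for p q \<mu>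
  proof -
    obtain w1 e1 t1 where p: "p = (w1, e1, t1)" by (cases p) auto
    obtain w2 e2 t2 where q: "q = (w2, e2, t2)" by (cases q) auto
    have "L (\<mu> *\<^sub>R w1 + (1 - \<mu>) *\<^sub>R w2) = \<mu> *\<^sub>R L w1 + (1 - \<mu>) *\<^sub>R L w2"
      using L by (simp add: linear_add linear_scale)
    moreover have "G y \<bullet> (\<mu> *\<^sub>R w1 + (1 - \<mu>) *\<^sub>R w2 - y) = \<mu> * (G y \<bullet> (w1 - y)) + (1 - \<mu>) * (G y \<bullet> (w2 - y))"
      by (simp add: inner_simps algebra_simps)
    ultimately show ?thesis unfolding p q h_def by (simp add: algebra_simps)
  qed
  have cW1: "convex W1" unfolding W1_def
    by (rule convex_affine_image[OF _ hlin]) (intro convex_Times Cc Dc convex_real_interval)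
  have cW2: "convex W2" unfolding W2_def
    by (rule convex_affine_image) (auto simp: algebra_simps)
  have y0: "(0, 0) \<in> W1" unfolding W1_def h_def using y by (force intro!: image_eqI[where x="(y, L y, 0)"])
  have "(0, -1) \<in> W2" unfolding W2_def by force
  have disj: "W1 \<inter> W2 = {}"
  proof (rule ccontr)
    assume "W1 \<inter> W2 \<noteq> {}"
    then obtain z where z1: "z \<in> W1" and z2: "z \<in> W2" by blast
    from z1 obtain w e t where w: "w \<in> Cb" "e \<in> D" "t \<ge> 0" "z = h (w, e, t)" unfolding W1_def by auto
    from z2 obtain s where s: "s < 0" "z = (0, s)" unfolding W2_def by auto
    have eq: "L w - e = 0" "G y \<bullet> (w - y) + t = s" using w(4) s(2) unfolding h_def by auto
    hence "L w \<in> D" using w(2) by simp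
    with y(3) w(1) have "G y \<bullet> (w - y) \<ge> 0" by blast
    with w(3) s(1) eq(2) show False by linarith
  qed
  obtain a b0 where ab: "a \<noteq> 0" "\<forall>x\<in>W1. a \<bullet> x \<le> b0" "\<forall>x\<in>W2. a \<bullet> x \<ge> b0"
    using separating_hyperplane_sets[OF cW1 cW2 _ _ disj] y0 \<open>(0, -1) \<in> W2\<close> by blast
  obtain d \<beta> where a: "a = (d, \<beta>)" by (cases a) auto
  have i1: "d \<bullet> (L w - e) + \<beta> * (G y \<bullet> (w - y) + t) \<le> b0" if "w \<in> Cb" "e \<in> D" "t \<ge> 0" for w e t
  proof -
    have "h (w, e, t) \<in> W1" unfolding W1_def using that by auto
    thus ?thesis using ab(2) unfolding a h_def by auto
  qed
  have i2: "\<beta> * s \<ge> b0" if "s < 0" for s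
  proof -
    have "(0, s) \<in> W2" unfolding W2_def using that by auto
    thus ?thesis using ab(3) unfolding a by auto
  qed
  have b0: "b0 \<ge> 0" using ab(2) y0 unfolding a by force
  have beta: "\<beta> \<le> 0" using i2[of "-1"] b0 by simp
  have b00: "b0 \<le> 0"
  proof (rule ccontr)
    assume "\<not> b0 \<le> 0"
    hence bp: "b0 > 0" by simp
    show False
    proof (cases "\<beta> = 0")
      case True thus False using i2[of "-1"] bp by simp
    next
      case False
      hence bn: "\<beta> < 0" using beta by simp
      have "b0 / (2*\<beta>) < 0" using bp bn by (simp add: divide_pos_neg)
      from i2[OF this] have "b0 / 2 \<ge> b0" using bn by (simp add: field_simps)
      thus False using bp by simp
    qed
  qed
  show ?thesis
  proof (cases "\<beta> = 0")
    case True
    have "d = 0"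
    proof (rule CQ)
      show "\<forall>w\<in>Cb. \<forall>e\<in>D. d \<bullet> (L w - e) \<le> 0" using i1[where t=0] True b00 by force
    qed
    with True a ab(1) show ?thesis by (simp add: zero_prod_def)
  next
    case False
    hence bn: "\<beta> < 0" using beta by simp
    define v where "v = (1/\<beta>) *\<^sub>R d"
    have "(- (G y + adjoint L v)) \<bullet> (c - y) \<le> 0" if c: "c \<in> Cb" for c
    proof -
      have "d \<bullet> (L c - L y) + \<beta> * (G y \<bullet> (c - y) + 0) \<le> 0" using i1[OF c y(2)] b00 by force
      moreover have "adjoint L v \<bullet> (c - y) = (1/\<beta>) * (d \<bullet> (L c - L y))"
      proof -
        have "adjoint L v \<bullet> (c - y) = (c - y) \<bullet> adjoint L v" by (rule inner_commute)
        also have "\<dots> = L (c - y) \<bullet> v" by (rule adjoint_works[OF L])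
        also have "\<dots> = (1/\<beta>) * (d \<bullet> (L c - L y))" unfolding v_def using L by (simp add: linear_diff inner_commute)
        finally show ?thesis .
      qed
      ultimately have "- (\<beta> * (G y \<bullet> (c - y)) + d \<bullet> (L c - L y)) \<ge> 0" by simp
      hence "(- 1/\<beta>) * (\<beta> * (G y \<bullet> (c - y)) + d \<bullet> (L c - L y)) \<le> 0"
        using bn by (simp add: divide_nonpos_neg mult_nonpos_nonneg mult_le_0_iff)
      moreover have "(- (G y + adjoint L v)) \<bullet> (c - y) = (- 1/\<beta>) * (\<beta> * (G y \<bullet> (c - y)) + d \<bullet> (L c - L y))"
        using \<open>adjoint L v \<bullet> (c - y) = (1/\<beta>) * (d \<bullet> (L c - L y))\<close> bn by (simp add: inner_simps field_simps)
      ultimately show ?thesis by simp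
    qed
    moreover have "(e - L y) \<bullet> v \<le> 0" if e: "e \<in> D" for e
    proof -
      have "d \<bullet> (L y - e) \<le> 0" using i1[OF y(1) e, of 0] b00 by simp
      hence "d \<bullet> (e - L y) \<ge> 0" by (simp add: inner_diff_right)
      moreover have "(e - L y) \<bullet> v = (1/\<beta>) * (d \<bullet> (e - L y))" unfolding v_def by (simp add: inner_commute)
      ultimately show ?thesis using bn by (simp add: divide_nonneg_neg)
    qed
    ultimately show ?thesis by blast
  qed
qed

lemma norm_Pair_sq: "norm (a, b)^2 = norm a^2 + norm b^2"
  by (simp add: norm_Pair)

lemma fbf_inst:
  fixes G :: "'a::euclidean_space \<Rightarrow> 'a" and L :: "'a \<Rightarrow> 'g::euclidean_space" and B :: "'a \<times> 'g \<Rightarrow> ('a \<times> 'g) set"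
  assumes L: "linear L" and Gm: "\<forall>x y. (G x - G y) \<bullet> (x - y) \<ge> 0"
    and Gl: "\<forall>x y. norm (G x - G y) \<le> \<kappa> * norm (x - y)" and \<kappa>: "\<kappa> > 0"
    and Cb: "Cb \<noteq> {}" "closed Cb" "convex Cb" and D: "D \<noteq> {}" "closed D" "convex D"
    and Bchar: "\<And>x u a b. (a, b) \<in> B (x, u) \<longleftrightarrow> x \<in> Cb \<and> (\<forall>c\<in>Cb. a \<bullet> (c - x) \<le> 0) \<and> b \<in> D \<and> (\<forall>e\<in>D. (e - b) \<bullet> u \<le> 0)"
    and g: "0 < \<gamma>" "\<gamma> * (\<kappa> + onorm L) < 1"
  shows "fbf (opA G L) B \<gamma> (\<kappa> + onorm L)"
proof (rule fbf.intro)
  have bl: "bounded_linear L" using L by (simp add: linear_conv_bounded_linear)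
  have adjl: "linear (adjoint L)" by (rule adjoint_linear[OF L])
  have Aeq: "opA G L (x, u) = (G x + adjoint L u, - L x)" for x u by (simp add: opA_def)
  show "0 \<le> (opA G L z1 - opA G L z2) \<bullet> (z1 - z2)" for z1 z2
  proof -
    obtain x u where z1: "z1 = (x, u)" by (cases z1) auto
    obtain y v where z2: "z2 = (y, v)" by (cases z2) auto
    have e1: "adjoint L u - adjoint L v = adjoint L (u - v)" using adjl by (simp add: linear_diff)
    have e2: "L x - L y = L (x - y)" using L by (simp add: linear_diff)
    have e3: "(adjoint L (u - v)) \<bullet> (x - y) = L (x - y) \<bullet> (u - v)"
      using adjoint_works[OF L, of "x - y" "u - v"] by (simp add: inner_commute)
    have "(opA G L z1 - opA G L z2) \<bullet> (z1 - z2) =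
          (G x - G y) \<bullet> (x - y) + (adjoint L u - adjoint L v) \<bullet> (x - y) - (L x - L y) \<bullet> (u - v)"
      unfolding z1 z2 Aeq by (simp add: inner_simps algebra_simps)
    also have "\<dots> = (G x - G y) \<bullet> (x - y)" unfolding e1 e2 e3 by simp
    finally show ?thesis using Gm by simp
  qed
  show "norm (opA G L z1 - opA G L z2) \<le> (\<kappa> + onorm L) * norm (z1 - z2)" for z1 z2
  proof -
    obtain x u where z1: "z1 = (x, u)" by (cases z1) auto
    obtain y v where z2: "z2 = (y, v)" by (cases z2) auto
    define p where "p = adjoint L (u - v)"
    define q where "q = - L (x - y)"
    have dz: "z1 - z2 = (x - y, u - v)" unfolding z1 z2 by simp
    have e1: "adjoint L u - adjoint L v = adjoint L (u - v)" using adjl by (simp add: linear_diff)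
    have e2: "L x - L y = L (x - y)" using L by (simp add: linear_diff)
    have "opA G L z1 - opA G L z2 = (G x - G y + (adjoint L u - adjoint L v), - (L x - L y))"
      unfolding z1 z2 Aeq by simp
    also have "\<dots> = (G x - G y, 0) + (p, q)" unfolding e1 e2 p_def q_def by simp
    finally have e: "opA G L z1 - opA G L z2 = (G x - G y, 0) + (p, q)" .
    have n1: "norm (G x - G y, 0::'g) \<le> \<kappa> * norm (z1 - z2)"
    proof -
      have "norm (G x - G y, 0::'g) = norm (G x - G y)" by (simp add: norm_Pair)
      also have "\<dots> \<le> \<kappa> * norm (x - y)" using Gl by simp
      also have "\<dots> \<le> \<kappa> * norm (z1 - z2)" unfolding dz using \<kappa> by (simp add: norm_fst_le mult_left_mono)
      finally show ?thesis .
    qed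
    have n2: "norm (p, q) \<le> onorm L * norm (z1 - z2)"
    proof -
      have np: "norm p \<le> onorm L * norm (u - v)" unfolding p_def by (rule adjoint_bound[OF L])
      have nq: "norm q \<le> onorm L * norm (x - y)" unfolding q_def using onorm[OF bl] by simp
      have o: "onorm L \<ge> 0" by (rule onorm_pos_le[OF bl])
      have "norm (p, q)^2 = norm p^2 + norm q^2" by (rule norm_Pair_sq)
      also have "\<dots> \<le> (onorm L * norm (u - v))^2 + (onorm L * norm (x - y))^2"
        using np nq by (intro add_mono power_mono) auto
      also have "\<dots> = (onorm L * norm (z1 - z2))^2"
        unfolding dz power_mult_distrib norm_Pair_sq by (simp add: distrib_left)
      finally have sq: "norm (p, q)^2 \<le> (onorm L * norm (z1 - z2))^2" .
      show ?thesis by (rule power2_le_imp_le[OF sq]) (simp add: o)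
    qed
    have "norm (opA G L z1 - opA G L z2) \<le> norm (G x - G y, 0::'g) + norm (p, q)"
      unfolding e by (rule norm_triangle_ineq)
    also have "\<dots> \<le> (\<kappa> + onorm L) * norm (z1 - z2)" using n1 n2 by (simp add: algebra_simps)
    finally show ?thesis .
  qed
  show "0 \<le> \<kappa> + onorm L" using \<kappa> onorm_pos_le[OF bl] by simp
  show "0 < \<gamma>" by (rule g(1))
  show "\<gamma> * (\<kappa> + onorm L) < 1" by (rule g(2))
  show "0 \<le> (a - b) \<bullet> (z1 - z2)" if a: "a \<in> B z1" and b: "b \<in> B z2" for z1 z2 a b
  proof -
    obtain x u where z1: "z1 = (x, u)" by (cases z1) auto
    obtain y v where z2: "z2 = (y, v)" by (cases z2) auto
    obtain a1 a2 where ae: "a = (a1, a2)" by (cases a) auto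
    obtain b1 b2 where be: "b = (b1, b2)" by (cases b) auto
    have A: "x \<in> Cb" "\<forall>c\<in>Cb. a1 \<bullet> (c - x) \<le> 0" "a2 \<in> D" "\<forall>e\<in>D. (e - a2) \<bullet> u \<le> 0"
      using a unfolding z1 ae Bchar by auto
    have B': "y \<in> Cb" "\<forall>c\<in>Cb. b1 \<bullet> (c - y) \<le> 0" "b2 \<in> D" "\<forall>e\<in>D. (e - b2) \<bullet> v \<le> 0"
      using b unfolding z2 be Bchar by auto
    have "a1 \<bullet> (y - x) \<le> 0" "b1 \<bullet> (x - y) \<le> 0" using A B' by auto
    hence t1: "(a1 - b1) \<bullet> (x - y) \<ge> 0" by (simp add: inner_simps)
    have "(b2 - a2) \<bullet> u \<le> 0" "(a2 - b2) \<bullet> v \<le> 0" using A B' by auto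
    hence t2: "(a2 - b2) \<bullet> (u - v) \<ge> 0" by (simp add: inner_simps)
    show ?thesis unfolding z1 z2 ae be using t1 t2 by simp
  qed
  show "\<exists>w. \<exists>b\<in>B w. z = w + \<gamma> *\<^sub>R b" for z
  proof -
    obtain z1 z2 where z: "z = (z1, z2)" by (cases z) auto
    define w1 where "w1 = closest_point Cb z1"
    define b2 where "b2 = closest_point D ((1/\<gamma>) *\<^sub>R z2)"
    have w1: "w1 \<in> Cb" unfolding w1_def by (rule closest_point_in_set[OF Cb(2,1)])
    have b2: "b2 \<in> D" unfolding b2_def by (rule closest_point_in_set[OF D(2,1)])
    have "((1/\<gamma>) *\<^sub>R (z1 - w1)) \<bullet> (c - w1) \<le> 0" if c: "c \<in> Cb" for c
    proof -
      have "(z1 - w1) \<bullet> (c - w1) \<le> 0"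
        using any_closest_point_dot[OF Cb(3,2) w1 c] closest_point_exists(2)[OF Cb(2,1), of z1] unfolding w1_def by blast
      thus ?thesis using g(1) by (simp add: divide_nonpos_pos)
    qed
    moreover have "(e - b2) \<bullet> (z2 - \<gamma> *\<^sub>R b2) \<le> 0" if e: "e \<in> D" for e
    proof -
      have "((1/\<gamma>) *\<^sub>R z2 - b2) \<bullet> (e - b2) \<le> 0"
        using any_closest_point_dot[OF D(3,2) b2 e] closest_point_exists(2)[OF D(2,1), of "(1/\<gamma>) *\<^sub>R z2"] unfolding b2_def by blast
      moreover have "z2 - \<gamma> *\<^sub>R b2 = \<gamma> *\<^sub>R ((1/\<gamma>) *\<^sub>R z2 - b2)" using g(1) by (simp add: algebra_simps)
      ultimately show ?thesis using g(1) by (simp add: inner_commute mult_nonneg_nonpos)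
    qed
    ultimately have "((1/\<gamma>) *\<^sub>R (z1 - w1), b2) \<in> B (w1, z2 - \<gamma> *\<^sub>R b2)"
      unfolding Bchar using w1 b2 by blast
    moreover have "z = (w1, z2 - \<gamma> *\<^sub>R b2) + \<gamma> *\<^sub>R ((1/\<gamma>) *\<^sub>R (z1 - w1), b2)"
      unfolding z using g(1) by simp
    ultimately show ?thesis by blast
  qed
qed


theorem theorem1:
  fixes m :: nat
    and P :: "nat \<Rightarrow> 'a::euclidean_space \<Rightarrow> 'a"
    and C :: "nat \<Rightarrow> 'a set"
    and D :: "'g::euclidean_space set"
    and L :: "'a \<Rightarrow> 'g"
    and f fu :: "nat \<Rightarrow> 'a \<Rightarrow> real"
    and \<kappa> \<gamma> \<alpha> :: real
    and lam :: "nat \<Rightarrow> real"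
    and \<xi> :: "nat \<Rightarrow> 'a \<times> 'g"
  defines "G \<equiv> pseudo_grad m P f"
    and "Gu \<equiv> pseudo_grad m P fu"
    and "V \<equiv> VI_sol (pseudo_grad m P f) (feas m P C L D)"
  defines "Vu \<equiv> VI_sol (pseudo_grad m P fu) V"
    and "Ta \<equiv> T_alpha \<alpha> (T_FBF \<gamma> (opA (pseudo_grad m P f) L) (opB m P C D))"
  assumes decomp: "orth_decomp m P"
    and C: "\<forall>i\<in>{1..m}. C i \<subseteq> range (P i) \<and> C i \<noteq> {} \<and> closed (C i) \<and> convex (C i)"
    and D: "D \<noteq> {}" "closed D" "convex D"
    and L: "linear L"
    and f_convex: "\<forall>i\<in>{1..m}. \<forall>x. convex_on (range (P i)) (\<lambda>y. f i (repl (P i) x y))"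
    and f_diff: "\<forall>i\<in>{1..m}. \<forall>x. \<forall>y\<in>range (P i).
                   (\<lambda>z. f i (repl (P i) x z)) differentiable (at y within range (P i))"
    and G_mono: "\<forall>x y. (G x - G y) \<bullet> (x - y) \<ge> 0"
    and G_lip: "\<kappa> > 0" "\<forall>x y. norm (G x - G y) \<le> \<kappa> * norm (x - y)"
    and V_ne: "V \<noteq> {}"
    and fu_convex: "\<forall>i\<in>{1..m}. \<forall>x. convex_on (range (P i)) (\<lambda>y. fu i (repl (P i) x y))"
    and fu_diff: "\<forall>i\<in>{1..m}. \<forall>x. \<forall>y\<in>range (P i).
                   (\<lambda>z. fu i (repl (P i) x z)) differentiable (at y within range (P i))"
    and gamma: "0 < \<gamma>" "\<gamma> < 1 / (\<kappa> + onorm L)"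
    and alpha: "0 < \<alpha>" "\<alpha> < 1"
    and lam: "\<forall>n. lam n \<ge> 0" "lam \<longlonglongrightarrow> 0" "\<not> summable lam"
    and iter: "\<forall>n. \<xi> (Suc n) = Ta (\<xi> n) - lam (Suc n) *\<^sub>R (Gu (fst (Ta (\<xi> n))), 0)"
    and Gu_lip: "\<exists>K. \<forall>x y. norm (Gu x - Gu y) \<le> K * norm (x - y)"
    and Gu_mono: "\<forall>x y. (Gu x - Gu y) \<bullet> (x - y) \<ge> 0"
    and Gu_para: "\<forall>x y. (Gu x - Gu y) \<bullet> (x - y) = 0 \<longleftrightarrow> Gu x = Gu y"
    and Fix_bdd: "bounded {z. Ta z = z}"
    and xi_bdd: "bounded (range \<xi>)"
  shows "Vu \<noteq> {} \<and> (\<lambda>n. infdist (fst (\<xi> n)) Vu) \<longlonglongrightarrow> 0"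
proof -
  have Cr: "\<forall>i\<in>{1..m}. C i \<subseteq> range (P i)" using C by blast
  define Cb where "Cb = Cbox m P C"
  have Cp: "Cb \<noteq> {}" "closed Cb" "convex Cb" unfolding Cb_def using Cbox_props[OF decomp C] by auto
  have Bchar: "(a, b) \<in> opB m P C D (x, u) \<longleftrightarrow> x \<in> Cb \<and> (\<forall>c\<in>Cb. a \<bullet> (c - x) \<le> 0) \<and> b \<in> D \<and> (\<forall>e\<in>D. (e - b) \<bullet> u \<le> 0)" for x u a b
  proof -
    have "(a, b) \<in> opB m P C D (x, u) \<longleftrightarrow> (\<forall>i\<in>{1..m}. P i a \<in> normal_cone (range (P i)) (C i) (P i x))
           \<and> b \<in> subdiff (conjugate (iota D)) u" unfolding opB_def by simp
    also have "\<dots> \<longleftrightarrow> x \<in> Cb \<and> (\<forall>c\<in>Cb. a \<bullet> (c - x) \<le> 0) \<and> b \<in> D \<and> (\<forall>e\<in>D. (e - b) \<bullet> u \<le> 0)"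
      unfolding Cb_def normal_char[OF decomp Cr] subdiff_char[OF D] by blast
    finally show ?thesis .
  qed
  have bl: "bounded_linear L" using L by (simp add: linear_conv_bounded_linear)
  define K where "K = \<kappa> + onorm L"
  have Kpos: "K > 0" unfolding K_def using G_lip(1) onorm_pos_le[OF bl] by simp
  have gK: "\<gamma> * K < 1" using gamma(2) Kpos unfolding K_def[symmetric] by (simp add: less_divide_eq)
  have Gm: "\<forall>x y. (pseudo_grad m P f x - pseudo_grad m P f y) \<bullet> (x - y) \<ge> 0" using G_mono unfolding G_def .
  have Gl: "\<forall>x y. norm (pseudo_grad m P f x - pseudo_grad m P f y) \<le> \<kappa> * norm (x - y)" using G_lip(2) unfolding G_def .
  have fbfI: "fbf (opA (pseudo_grad m P f) L) (opB m P C D) \<gamma> K"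
    unfolding K_def by (rule fbf_inst[OF L Gm Gl G_lip(1) Cp D Bchar gamma(1)]) (use gK in \<open>simp add: K_def\<close>)
  interpret I: fbf "opA (pseudo_grad m P f) L" "opB m P C D" \<gamma> K by (rule fbfI)
  have Zfix: "I.Zs = {z. Ta z = z}" using I.fix_Ta[of \<alpha>] alpha unfolding Ta_def by auto
  have Zbdd: "bounded I.Zs" using Fix_bdd Zfix by simp
  define F where "F = (\<lambda>z::'a \<times> 'g. (Gu (fst z), 0::'g))"
  obtain KG where KG: "\<forall>x y. norm (Gu x - Gu y) \<le> KG * norm (x - y)" using Gu_lip by blast
  have Gu_cont: "continuous_on UNIV Gu"
  proof -
    have KG0: "KG \<ge> 0"
    proof (rule ccontr)
      assume "\<not> KG \<ge> 0"
      obtain v :: 'a where "v \<in> Basis" using nonempty_Basis by blast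
      hence "v \<noteq> 0" by (rule nonzero_Basis)
      hence "KG * norm (v - 0) < 0" using \<open>\<not> KG \<ge> 0\<close> by (simp add: mult_neg_pos)
      moreover have "norm (Gu v - Gu 0) \<le> KG * norm (v - 0)" using KG by blast
      ultimately show False using norm_ge_zero[of "Gu v - Gu 0"] by linarith
    qed
    show ?thesis by (rule lipschitz_on_continuous_on[where L=KG], rule lipschitz_onI)
       (use KG KG0 in \<open>auto simp: dist_norm\<close>)
  qed
  have F_cont: "continuous_on UNIV F" unfolding F_def
    by (auto intro!: continuous_intros continuous_on_compose2[OF Gu_cont])
  have Fi: "(F x - F y) \<bullet> (x - y) = (Gu (fst x) - Gu (fst y)) \<bullet> (fst x - fst y)" for x y
    by (cases x, cases y) (simp add: F_def)
  have F_mono: "(F x - F y) \<bullet> (x - y) \<ge> 0" for x y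
    unfolding Fi using Gu_mono by blast
  have F_para: "(F x - F y) \<bullet> (x - y) = 0 \<Longrightarrow> F x = F y" for x y
    unfolding Fi using Gu_para unfolding F_def by simp
  have iter': "\<xi> (Suc n) = T_alpha \<alpha> (T_FBF \<gamma> (opA (pseudo_grad m P f) L) (opB m P C D)) (\<xi> n)
      - lam (Suc n) *\<^sub>R F (T_alpha \<alpha> (T_FBF \<gamma> (opA (pseudo_grad m P f) L) (opB m P C D)) (\<xi> n))" for n
    using iter unfolding F_def Ta_def by simp
  have convI: "fbf_conv (opA (pseudo_grad m P f) L) (opB m P C D) \<gamma> K \<alpha> F lam \<xi>"
  proof (intro fbf_conv.intro fbf_iter.intro fbfI)
    show "fbf_iter_axioms (opA (pseudo_grad m P f) L) (opB m P C D) \<gamma> \<alpha> F lam \<xi>"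
      by (rule fbf_iter_axioms.intro) (use alpha F_cont lam iter' xi_bdd in auto)
    show "fbf_conv_axioms (opA (pseudo_grad m P f) L) (opB m P C D) F"
      by (rule fbf_conv_axioms.intro) (use Zbdd F_mono F_para in auto)
  qed
  interpret J: fbf_conv "opA (pseudo_grad m P f) L" "opB m P C D" \<gamma> K \<alpha> F lam \<xi> by (rule convI)
  have Aeq: "opA (pseudo_grad m P f) L (x, u) = (G x + adjoint L u, - L x)" for x u
    by (simp add: opA_def G_def)
  have Zchar: "(x, u) \<in> I.Zs \<longleftrightarrow> x \<in> Cb \<and> (\<forall>c\<in>Cb. (- (G x + adjoint L u)) \<bullet> (c - x) \<le> 0) \<and> L x \<in> D \<and> (\<forall>e\<in>D. (e - L x) \<bullet> u \<le> 0)" for x u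
  proof -
    have "(x, u) \<in> I.Zs \<longleftrightarrow> (- (G x + adjoint L u), L x) \<in> opB m P C D (x, u)"
      unfolding I.Zs_def by (simp add: Aeq)
    also have "\<dots> \<longleftrightarrow> x \<in> Cb \<and> (\<forall>c\<in>Cb. (- (G x + adjoint L u)) \<bullet> (c - x) \<le> 0) \<and> L x \<in> D \<and> (\<forall>e\<in>D. (e - L x) \<bullet> u \<le> 0)"
      by (rule Bchar)
    finally show ?thesis .
  qed
  have feq: "feas m P C L D = {x. x \<in> Cb \<and> L x \<in> D}" unfolding feas_def Cb_def Cbox_def by auto
  have Vchar: "y \<in> V \<longleftrightarrow> y \<in> Cb \<and> L y \<in> D \<and> (\<forall>w\<in>Cb. L w \<in> D \<longrightarrow> G y \<bullet> (w - y) \<ge> 0)" for y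
    unfolding V_def G_def VI_sol_def feq by auto
  have fstZ: "x \<in> V" if "(x, u) \<in> I.Zs" for x u
  proof -
    from that have z: "x \<in> Cb" "\<forall>c\<in>Cb. (- (G x + adjoint L u)) \<bullet> (c - x) \<le> 0" "L x \<in> D" "\<forall>e\<in>D. (e - L x) \<bullet> u \<le> 0"
      using Zchar by blast+
    have "G x \<bullet> (w - x) \<ge> 0" if w: "w \<in> Cb" "L w \<in> D" for w
    proof -
      have a1: "(- (G x + adjoint L u)) \<bullet> (w - x) \<le> 0" using z w by blast
      have a2: "adjoint L u \<bullet> (w - x) = (L w - L x) \<bullet> u"
        using adjoint_works[OF L, of "w - x" u] L by (simp add: inner_commute linear_diff)
      have a3: "(L w - L x) \<bullet> u \<le> 0" using z w by blast
      have "(- (G x + adjoint L u)) \<bullet> (w - x) = - (G x \<bullet> (w - x)) - adjoint L u \<bullet> (w - x)"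
        by (simp add: inner_simps)
      thus ?thesis using a1 a2 a3 by linarith
    qed
    thus ?thesis using z Vchar by blast
  qed
  obtain z0 where z0: "z0 \<in> I.Zs" using J.Z_ne by blast
  obtain x0 u0 where xu0: "z0 = (x0, u0)" by (cases z0) auto
  have z0c: "x0 \<in> Cb" "\<forall>c\<in>Cb. (- (G x0 + adjoint L u0)) \<bullet> (c - x0) \<le> 0" "L x0 \<in> D" "\<forall>e\<in>D. (e - L x0) \<bullet> u0 \<le> 0"
    using z0 xu0 Zchar by blast+
  obtain R where R: "\<forall>z\<in>I.Zs. norm z \<le> R" using Zbdd unfolding bounded_iff by blast
  have "norm z0 \<le> R" using R z0 by blast
  hence R0: "R \<ge> 0" using norm_ge_zero[of z0] by linarith
  have CQ: "d = 0" if hd: "\<forall>w\<in>Cb. \<forall>e\<in>D. d \<bullet> (L w - e) \<le> 0" for d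
  proof (rule ccontr)
    assume dn: "d \<noteq> 0"
    have inZ: "(x0, u0 - k *\<^sub>R d) \<in> I.Zs" if k: "k \<ge> 0" for k
    proof -
      have "(- (G x0 + adjoint L (u0 - k *\<^sub>R d))) \<bullet> (c - x0) \<le> 0" if c: "c \<in> Cb" for c
      proof -
        have a1: "(- (G x0 + adjoint L u0)) \<bullet> (c - x0) \<le> 0" using z0c c by blast
        have a2: "adjoint L d \<bullet> (c - x0) = d \<bullet> (L c - L x0)"
          using adjoint_works[OF L, of "c - x0" d] L by (simp add: inner_commute linear_diff)
        have a3: "d \<bullet> (L c - L x0) \<le> 0" using hd c z0c(3) by blast
        have adj: "adjoint L (u0 - k *\<^sub>R d) = adjoint L u0 - k *\<^sub>R adjoint L d"
          using adjoint_linear[OF L] by (simp add: linear_diff linear_scale)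
        have e: "(- (G x0 + adjoint L (u0 - k *\<^sub>R d))) \<bullet> (c - x0) = (- (G x0 + adjoint L u0)) \<bullet> (c - x0) + k * (adjoint L d \<bullet> (c - x0))"
          unfolding adj by (simp add: inner_simps algebra_simps)
        have "k * (adjoint L d \<bullet> (c - x0)) \<le> 0" unfolding a2 using a3 k by (simp add: mult_nonneg_nonpos)
        thus ?thesis using a1 e by linarith
      qed
      moreover have "(e - L x0) \<bullet> (u0 - k *\<^sub>R d) \<le> 0" if e: "e \<in> D" for e
      proof -
        have b1: "(e - L x0) \<bullet> u0 \<le> 0" using z0c e by blast
        have "d \<bullet> (L x0 - e) \<le> 0" using hd z0c(1) e by blast
        hence "(e - L x0) \<bullet> d \<ge> 0" by (simp add: inner_diff_left inner_diff_right inner_commute)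
        hence b2: "k * ((e - L x0) \<bullet> d) \<ge> 0" using k by simp
        have "(e - L x0) \<bullet> (u0 - k *\<^sub>R d) = (e - L x0) \<bullet> u0 - k * ((e - L x0) \<bullet> d)"
          by (simp add: inner_diff_right)
        thus ?thesis using b1 b2 by linarith
      qed
      ultimately show ?thesis using Zchar z0c by blast
    qed
    define k where "k = (R + norm u0 + 1) / norm d"
    have nd: "norm d > 0" using dn by simp
    have k0: "k \<ge> 0" unfolding k_def using R0 nd by simp
    have kd: "k * norm d = R + norm u0 + 1" unfolding k_def using nd by simp
    have "norm (x0, u0 - k *\<^sub>R d) \<le> R" using R inZ[OF k0] by blast
    moreover have "norm (u0 - k *\<^sub>R d) \<le> norm (x0, u0 - k *\<^sub>R d)" by (rule norm_snd_le)
    moreover have "norm (k *\<^sub>R d) \<le> norm u0 + norm (u0 - k *\<^sub>R d)"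
      using norm_triangle_ineq4[of u0 "u0 - k *\<^sub>R d"] by simp
    moreover have "norm (k *\<^sub>R d) = k * norm d" using k0 by simp
    ultimately show False using kd by linarith
  qed
  have Vsub: "\<exists>v. (y, v) \<in> I.Zs" if y: "y \<in> V" for y
  proof -
    from y have yc: "y \<in> Cb" "L y \<in> D" "\<forall>w\<in>Cb. L w \<in> D \<longrightarrow> G y \<bullet> (w - y) \<ge> 0" using Vchar by blast+
    obtain v where v: "\<forall>c\<in>Cb. (- (G y + adjoint L v)) \<bullet> (c - y) \<le> 0" "\<forall>e\<in>D. (e - L y) \<bullet> v \<le> 0"
      using multiplier[where G=G, OF L Cp(3) D(3) yc CQ] by blast
    thus ?thesis using Zchar yc by blast
  qed
  have fstS: "fst s \<in> Vu" if s: "s \<in> J.S" for s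
  proof -
    obtain x u where xu: "s = (x, u)" by (cases s) auto
    have sZ: "(x, u) \<in> I.Zs" using s J.S_sub xu by auto
    have xV: "x \<in> V" by (rule fstZ[OF sZ])
    have "Gu x \<bullet> (y - x) \<ge> 0" if y: "y \<in> V" for y
    proof -
      obtain v where "(y, v) \<in> I.Zs" using Vsub[OF y] by blast
      hence "F (x, u) \<bullet> ((y, v) - (x, u)) \<ge> 0" using s xu unfolding J.S_def VI_sol_def by blast
      thus ?thesis unfolding F_def by simp
    qed
    thus ?thesis using xV unfolding Vu_def Gu_def[symmetric] VI_sol_def xu by auto
  qed
  have Vu_ne: "Vu \<noteq> {}" using J.S_ne fstS by blast
  have le: "infdist (fst (\<xi> n)) Vu \<le> infdist (\<xi> n) J.S" for n
  proof -
    obtain s where s: "s \<in> J.S" "infdist (\<xi> n) J.S = dist (\<xi> n) s"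
      using infdist_attains_inf[OF J.S_closed J.S_ne] by blast
    have "infdist (fst (\<xi> n)) Vu \<le> dist (fst (\<xi> n)) (fst s)" by (rule infdist_le[OF fstS[OF s(1)]])
    also have "\<dots> \<le> dist (\<xi> n) s" by (rule dist_fst_le)
    finally show ?thesis using s(2) by simp
  qed
  have "(\<lambda>n. infdist (fst (\<xi> n)) Vu) \<longlonglongrightarrow> 0"
  proof (rule Lim_null_comparison[OF _ J.conv])
    show "\<forall>\<^sub>F n in sequentially. norm (infdist (fst (\<xi> n)) Vu) \<le> infdist (\<xi> n) J.S"
      using le by (simp add: infdist_nonneg)
  qed
  with Vu_ne show ?thesis by blast
qed

end
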